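(* Assume Hypothesis (H2). Then for all $\varphi\in C^1_b(E)$ and all $z\in Q^{1/2}(H)$, the right-hand side below is continuous in $r<0$ and, for a suitable version of the conditional expectation (equality holding for almost every $r<0$ for any version), $$\mathbb E\big[z(\tau_x)\,\varphi\,\big|\,g=r\big]\,\rho(r)=-\int_{\{g\ge r\}}\Big(D\varphi(x)\cdot z-\langle Q^{-1/2}x,Q^{-1/2}z\rangle\,\varphi(x)\Big)\,\mu(dx)\qquad\text{for every }r<0.$$
   Context: Let $X(t)$, $t\in[0,1]$, be a Gaussian process whose law $\mu=N_Q$ is a non-degenerate centered Gaussian measure on $H=L^2(0,1)$, with $\mu(E)=1$ where $E=C([0,1])$ with the sup norm, and assume $Q^{1/2}(H)\subset E$. For $z\in Q^{1/2}(H)$, $\langle Q^{-1/2}x,Q^{-1/2}z\rangle$ denotes the $L^2(H,\mu)$-limit of $\sum_{h\le n}\lambda_h^{-1}\langle x,e_h\rangle\langle z,e_h\rangle$, where $Qe_h=\lambda_he_h$ with $(e_h)$ orthonormal basis. $C^1_b(E)$: bounded continuously Fréchet differentiable functions on $E$ with bounded derivative; $D\varphi(x)\cdot z$ is the directional derivative. Let $g(x):=\min_{t\in[0,1]}X(t)(x)$, $x\in E$. Hypothesis (H2): (i) the law of $g$ is absolutely continuous with respect to Lebesgue measure on $(-\infty,0]$, with density $\rho$; (ii) for $\mu$-a.e. $x\in E$ the path $X(\cdot)(x)$ attains its minimum $g(x)$ at a unique point $\tau_x\in[0,1]$, and $g$ has directional derivatives in all directions $z\in E$ given by $Dg(x)\cdot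 z=z(\tau_x)$ (and the chain rule $D(\theta(g))=\theta'(g)Dg$ for Lipschitz $\theta$ is available, so that the integration by parts formula of Proposition 4.2 applies to such functions). *)

theory Defs
  imports "HOL-Probability.Probability"
begin

text \<open>Elements of E are represented as functions real => real that are continuous
on [0,1] and vanish outside [0,1] (a canonical normalisation).\<close>

definition C01 :: "(real \<Rightarrow> real) set" where
  "C01 = {x. continuous_on {0..1} x \<and> (\<forall>t. t \<notin> {0..1} \<longrightarrow> x t = 0)}"

definition supn :: "(real \<Rightarrow> real) \<Rightarrow> real" where
  "supn x = (SUP t\<in>{0..1}. \<bar>x t\<bar>)"

text \<open>Borel sigma-algebra of E (generated by the evaluations t |-> x t).\<close>
definition E_sets :: "(real \<Rightarrow> real) measure" where
  "E_sets = restrict_space (Pi\<^sub>M UNIV (\<lambda>_::real. borel)) C01"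

definition sqint01 :: "(real \<Rightarrow> real) \<Rightarrow> bool" where
  "sqint01 f \<longleftrightarrow> f \<in> borel_measurable borel \<and> set_integrable lborel {0..1} (\<lambda>t. (f t)\<^sup>2)"

definition l2inner :: "(real \<Rightarrow> real) \<Rightarrow> (real \<Rightarrow> real) \<Rightarrow> real" where
  "l2inner f h = (LINT t:{0..1}|lborel. f t * h t)"

text \<open>(e k) orthonormal basis of L2(0,1), Q e_k = lam k e_k, Q non-degenerate trace class.\<close>
definition covariance_data :: "(nat \<Rightarrow> real \<Rightarrow> real) \<Rightarrow> (nat \<Rightarrow> real) \<Rightarrow> bool" where
  "covariance_data e lam \<longleftrightarrow>
     (\<forall>k. sqint01 (e k)) \<and>
     (\<forall>j k. l2inner (e j) (e k) = (if j = k then 1 else 0)) \<and>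
     (\<forall>f. sqint01 f \<longrightarrow> (\<lambda>k. (l2inner f (e k))\<^sup>2) sums (LINT t:{0..1}|lborel. (f t)\<^sup>2)) \<and>
     (\<forall>k. lam k > 0) \<and> summable lam"

definition Qform :: "(nat \<Rightarrow> real \<Rightarrow> real) \<Rightarrow> (nat \<Rightarrow> real) \<Rightarrow> (real \<Rightarrow> real) \<Rightarrow> real" where
  "Qform e lam h = (\<Sum>k. lam k * (l2inner h (e k))\<^sup>2)"

text \<open>mu is (the restriction to E of) the centered Gaussian measure N_Q on H = L2(0,1),
  with mu(E) = 1: characterised by its characteristic functional.\<close>
definition gaussian_on_E :: "(real \<Rightarrow> real) measure \<Rightarrow> (nat \<Rightarrow> real \<Rightarrow> real) \<Rightarrow> (nat \<Rightarrow> real) \<Rightarrow> bool" where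
  "gaussian_on_E \<mu> e lam \<longleftrightarrow>
     prob_space \<mu> \<and> space \<mu> = C01 \<and> sets \<mu> = sets E_sets \<and>
     (\<forall>h. sqint01 h \<longrightarrow>
        (CLINT x|\<mu>. cis (l2inner x h)) = complex_of_real (exp (- Qform e lam h / 2)))"

text \<open>Q^{1/2}(H) (Cameron-Martin space), elements represented by their continuous version.\<close>
definition CM :: "(nat \<Rightarrow> real \<Rightarrow> real) \<Rightarrow> (nat \<Rightarrow> real) \<Rightarrow> (real \<Rightarrow> real) set" where
  "CM e lam = {z \<in> C01. summable (\<lambda>k. (l2inner z (e k))\<^sup>2 / lam k)}"

text \<open>Hypothesis Q^{1/2}(H) \<subseteq> E.\<close>
definition CM_in_E :: "(nat \<Rightarrow> real \<Rightarrow> real) \<Rightarrow> (nat \<Rightarrow> real) \<Rightarrow> bool" where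
  "CM_in_E e lam \<longleftrightarrow>
     (\<forall>f. sqint01 f \<and> summable (\<lambda>k. (l2inner f (e k))\<^sup>2 / lam k) \<longrightarrow>
        (\<exists>y\<in>C01. AE t in lborel. t \<in> {0..1} \<longrightarrow> f t = y t))"

definition QWpart :: "(nat \<Rightarrow> real \<Rightarrow> real) \<Rightarrow> (nat \<Rightarrow> real) \<Rightarrow> (real \<Rightarrow> real) \<Rightarrow> nat \<Rightarrow> (real \<Rightarrow> real) \<Rightarrow> real" where
  "QWpart e lam z n x = (\<Sum>h\<le>n. l2inner x (e h) * l2inner z (e h) / lam h)"

text \<open>W is (a version of) <Q^{-1/2}x, Q^{-1/2}z>, the L2(mu)-limit of the partial sums.\<close>
definition is_QW :: "(real \<Rightarrow> real) measure \<Rightarrow> (nat \<Rightarrow> real \<Rightarrow> real) \<Rightarrow> (nat \<Rightarrow> real)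
     \<Rightarrow> (real \<Rightarrow> real) \<Rightarrow> ((real \<Rightarrow> real) \<Rightarrow> real) \<Rightarrow> bool" where
  "is_QW \<mu> e lam z W \<longleftrightarrow>
     W \<in> borel_measurable \<mu> \<and> integrable \<mu> (\<lambda>x. (W x)\<^sup>2) \<and>
     (\<lambda>n. \<integral>x. (QWpart e lam z n x - W x)\<^sup>2 \<partial>\<mu>) \<longlonglongrightarrow> 0"

definition C1b :: "((real \<Rightarrow> real) \<Rightarrow> real) \<Rightarrow> ((real \<Rightarrow> real) \<Rightarrow> (real \<Rightarrow> real) \<Rightarrow> real) \<Rightarrow> bool" where
  "C1b \<phi> D\<phi> \<longleftrightarrow>
     (\<exists>B. \<forall>x\<in>C01. \<bar>\<phi> x\<bar> \<le> B) \<and>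
     (\<forall>x\<in>C01. \<forall>z\<in>C01. \<forall>w\<in>C01. \<forall>a b.
        D\<phi> x (\<lambda>t. a * z t + b * w t) = a * D\<phi> x z + b * D\<phi> x w) \<and>
     (\<exists>C. \<forall>x\<in>C01. \<forall>z\<in>C01. \<bar>D\<phi> x z\<bar> \<le> C * supn z) \<and>
     (\<forall>x\<in>C01. \<forall>\<epsilon>>0. \<exists>\<delta>>0. \<forall>h\<in>C01. supn h < \<delta> \<longrightarrow>
        \<bar>\<phi> (\<lambda>t. x t + h t) - \<phi> x - D\<phi> x h\<bar> \<le> \<epsilon> * supn h) \<and>
     (\<forall>x\<in>C01. \<forall>\<epsilon>>0. \<exists>\<delta>>0. \<forall>y\<in>C01. supn (\<lambda>t. y t - x t) < \<delta> \<longrightarrow>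
        (\<forall>z\<in>C01. \<bar>D\<phi> y z - D\<phi> x z\<bar> \<le> \<epsilon> * supn z))"

definition gmin :: "(real \<Rightarrow> real) \<Rightarrow> real" where
  "gmin x = (INF t\<in>{0..1}. x t)"

definition tau :: "(real \<Rightarrow> real) \<Rightarrow> real" where
  "tau x = (if \<exists>!t. t \<in> {0..1} \<and> x t = gmin x then (THE t. t \<in> {0..1} \<and> x t = gmin x) else 0)"

definition H2 :: "(real \<Rightarrow> real) measure \<Rightarrow> (nat \<Rightarrow> real \<Rightarrow> real) \<Rightarrow> (nat \<Rightarrow> real) \<Rightarrow> (real \<Rightarrow> real) \<Rightarrow> bool" where
  "H2 \<mu> e lam \<rho> \<longleftrightarrow>
     \<comment> \<open>(i) law of g restricted to (-infinity,0] has Lebesgue density rho\<close>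
     \<rho> \<in> borel_measurable borel \<and> (\<forall>r. \<rho> r \<ge> 0) \<and>
     (\<forall>A\<in>sets borel. A \<subseteq> {..0} \<longrightarrow>
        emeasure \<mu> {x\<in>space \<mu>. gmin x \<in> A} = (\<integral>\<^sup>+ r. ennreal (\<rho> r) * indicator A r \<partial>lborel)) \<and>
     \<comment> \<open>(ii) a.e. unique minimiser and directional derivatives Dg(x).z = z(tau_x)\<close>
     (AE x in \<mu>. (\<exists>!t. t \<in> {0..1} \<and> x t = gmin x) \<and>
        (\<forall>z\<in>C01. ((\<lambda>s. gmin (\<lambda>t. x t + s * z t)) has_real_derivative z (tau x)) (at 0))) \<and>
     \<comment> \<open>chain rule D(theta(g)) = theta'(g) Dg for Lipschitz theta, so that the integration
        by parts formula (Prop. 4.2) applies to psi * theta(g), psi in C^1_b(E)\<close>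
     (\<forall>\<psi> D\<psi> \<theta> \<theta>' N z W L. C1b \<psi> D\<psi> \<longrightarrow> z \<in> CM e lam \<longrightarrow> is_QW \<mu> e lam z W \<longrightarrow>
        L-lipschitz_on UNIV \<theta> \<longrightarrow> \<theta>' \<in> borel_measurable borel \<longrightarrow>
        N \<in> null_sets lborel \<longrightarrow> (\<forall>s. s \<notin> N \<longrightarrow> (\<theta> has_real_derivative \<theta>' s) (at s)) \<longrightarrow>
        (AE x in \<mu>. gmin x \<notin> N) \<longrightarrow>
        (\<integral>x. D\<psi> x z * \<theta> (gmin x) + \<psi> x * \<theta>' (gmin x) * z (tau x) \<partial>\<mu>)
          = (\<integral>x. W x * \<psi> x * \<theta> (gmin x) \<partial>\<mu>))"

text \<open>c is a version of r |-> E[Y | g = r], i.e. c o g is a version of E[Y | sigma(g)].\<close>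
definition cond_exp_version :: "(real \<Rightarrow> real) measure \<Rightarrow> ((real \<Rightarrow> real) \<Rightarrow> real) \<Rightarrow> (real \<Rightarrow> real) \<Rightarrow> bool" where
  "cond_exp_version \<mu> Y c \<longleftrightarrow>
     c \<in> borel_measurable borel \<and> integrable \<mu> (\<lambda>x. c (gmin x)) \<and>
     (\<forall>A\<in>sets borel. (LINT x:{x\<in>space \<mu>. gmin x \<in> A}|\<mu>. Y x)
                    = (LINT x:{x\<in>space \<mu>. gmin x \<in> A}|\<mu>. c (gmin x)))"

end

theory Submission
  imports Defs
begin


lemma space_E: "space E_sets = C01"
  by (simp add: E_sets_def space_restrict_space space_PiM PiE_UNIV_domain)

lemma meas_eval[measurable]: "(\<lambda>x. x t) \<in> borel_measurable E_sets"
  unfolding E_sets_def by (intro measurable_restrict_space1) simp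

lemma C01_cont: "x \<in> C01 \<Longrightarrow> continuous_on {0..1} x" by (simp add: C01_def)
lemma C01_out: "x \<in> C01 \<Longrightarrow> t \<notin> {0..1} \<Longrightarrow> x t = 0" by (simp add: C01_def)

lemma C01_I: "continuous_on {0..1} x \<Longrightarrow> (\<And>t. t \<notin> {0..1} \<Longrightarrow> x t = 0) \<Longrightarrow> x \<in> C01"
  by (simp add: C01_def)

lemma C01_lin: "x \<in> C01 \<Longrightarrow> y \<in> C01 \<Longrightarrow> (\<lambda>t. a * x t + b * y t) \<in> C01"
  by (auto simp: C01_def intro!: continuous_intros)

lemma C01_diff: "x \<in> C01 \<Longrightarrow> y \<in> C01 \<Longrightarrow> (\<lambda>t. y t - x t) \<in> C01"
  by (auto simp: C01_def intro!: continuous_intros)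

lemma C01_add: "x \<in> C01 \<Longrightarrow> y \<in> C01 \<Longrightarrow> (\<lambda>t. x t + y t) \<in> C01"
  by (auto simp: C01_def intro!: continuous_intros)

lemma C01_add_scale: "x \<in> C01 \<Longrightarrow> y \<in> C01 \<Longrightarrow> (\<lambda>t. x t + s * y t) \<in> C01"
  by (auto simp: C01_def intro!: continuous_intros)

lemma supn_bdd: assumes "x \<in> C01" shows "bdd_above ((\<lambda>t. \<bar>x t\<bar>) ` {0..1})"
proof -
  have "continuous_on {0..1} (\<lambda>t. \<bar>x t\<bar>)" using assms by (auto simp: C01_def intro!: continuous_intros)
  then have "compact ((\<lambda>t. \<bar>x t\<bar>) ` {0..1})" by (intro compact_continuous_image) auto
  then show ?thesis by (intro bounded_imp_bdd_above compact_imp_bounded)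
qed

lemma abs_le_supn: "x \<in> C01 \<Longrightarrow> t \<in> {0..1} \<Longrightarrow> \<bar>x t\<bar> \<le> supn x"
  unfolding supn_def by (rule cSUP_upper[OF _ supn_bdd])

lemma supn_le: "(\<And>t. t \<in> {0..1} \<Longrightarrow> \<bar>x t\<bar> \<le> K) \<Longrightarrow> supn x \<le> K"
  unfolding supn_def by (rule cSUP_least) auto

lemma supn_nonneg: "x \<in> C01 \<Longrightarrow> 0 \<le> supn x"
  using abs_le_supn[of x 0] by force

definition Bpoly :: "nat \<Rightarrow> int list \<Rightarrow> real \<Rightarrow> real" where
  "Bpoly n l = (\<lambda>t. if t \<in> {0..1} then \<Sum>k\<le>n. (of_int (l!k) / real n) * Bernstein n k t else 0)"

definition Lflo :: "nat \<Rightarrow> (real \<Rightarrow> real) \<Rightarrow> int list" where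
  "Lflo n x = map (\<lambda>k. \<lfloor>real n * x (real k / real n)\<rfloor>) [0..<Suc n]"

lemma Bpoly_C01: "Bpoly n l \<in> C01"
proof (rule C01_I)
  have "continuous_on {0..1} (\<lambda>t. \<Sum>k\<le>n. (of_int (l!k) / real n) * Bernstein n k t)"
    unfolding Bernstein_def by (intro continuous_intros)
  then show "continuous_on {0..1} (Bpoly n l)"
    by (rule continuous_on_eq) (simp add: Bpoly_def)
qed (auto simp add: Bpoly_def)

lemma Lflo_meas: "Lflo n \<in> measurable E_sets (count_space UNIV)"
proof (subst measurable_count_space_eq2_countable, safe)
  fix l :: "int list"
  have "Lflo n -` {l} \<inter> space E_sets = {x \<in> space E_sets. length l = Suc n \<and>
     (\<forall>k<Suc n. of_int (l!k) \<le> real n * x (real k / real n) \<and> real n * x (real k / real n) < of_int (l!k) + 1)}"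
  proof -
    have "\<And>x. (Lflo n x = l) \<longleftrightarrow> (length l = Suc n \<and> (\<forall>k<Suc n. \<lfloor>real n * x (real k / real n)\<rfloor> = l!k))"
      unfolding Lflo_def list_eq_iff_nth_eq by (auto simp del: upt_Suc simp add: nth_map)
    then show ?thesis by (auto simp: floor_eq_iff)
  qed
  also have "\<dots> \<in> sets E_sets" by measurable
  finally show "Lflo n -` {l} \<inter> space E_sets \<in> sets E_sets" .
qed auto

lemma supcont_meas:
  fixes f :: "(real \<Rightarrow> real) \<Rightarrow> real"
  assumes cont: "\<And>x e. x \<in> C01 \<Longrightarrow> e > 0 \<Longrightarrow> \<exists>d>0. \<forall>y\<in>C01. supn (\<lambda>t. y t - x t) < d \<longrightarrow> \<bar>f y - f x\<bar> < e"
  shows "f \<in> borel_measurable E_sets"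
proof (rule borel_measurable_LIMSEQ_real[where u="\<lambda>n x. f (Bpoly (Suc n) (Lflo (Suc n) x))"])
  fix n
  show "(\<lambda>x. f (Bpoly (Suc n) (Lflo (Suc n) x))) \<in> borel_measurable E_sets"
    using measurable_compose[OF Lflo_meas[of "Suc n"] borel_measurable_count_space[of "\<lambda>l. f (Bpoly (Suc n) l)"]]
    by simp
next
  fix x assume "x \<in> space E_sets"
  then have x: "x \<in> C01" by (simp add: space_E)
  show "(\<lambda>n. f (Bpoly (Suc n) (Lflo (Suc n) x))) \<longlonglongrightarrow> f x"
  proof (rule LIMSEQ_I)
    fix e :: real assume "e > 0"
    from cont[OF x this] obtain d where d: "d > 0" "\<And>y. y\<in>C01 \<Longrightarrow> supn (\<lambda>t. y t - x t) < d \<Longrightarrow> \<bar>f y - f x\<bar> < e"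
      by blast
    from Bernstein_Weierstrass[OF C01_cont[OF x], of "d/2"] d obtain N1 where
      N1: "\<And>n t. N1 \<le> n \<Longrightarrow> t \<in> {0..1} \<Longrightarrow> \<bar>x t - (\<Sum>k\<le>n. x(k/n) * Bernstein n k t)\<bar> < d/2" by auto
    obtain N2 :: nat where N2: "inverse (real (Suc N2)) < d/2" using reals_Archimedean d by (metis half_gt_zero)
    show "\<exists>N. \<forall>n\<ge>N. norm (f (Bpoly (Suc n) (Lflo (Suc n) x)) - f x) < e"
    proof (intro exI allI impI)
      fix n assume n: "max N1 N2 \<le> n"
      define m where "m = Suc n"
      have m: "N1 \<le> m" "m > 0" using n by (auto simp: m_def)
      have im: "1 / real m < d/2"
      proof -
        have "1 / real m \<le> inverse (real (Suc N2))" using n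
          by (simp add: m_def divide_inverse le_imp_inverse_le)
        then show ?thesis using N2 by linarith
      qed
      have "supn (\<lambda>t. Bpoly m (Lflo m x) t - x t) \<le> 1 / real m + d/2"
      proof (rule supn_le)
        fix t :: real assume t: "t \<in> {0..1}"
        have "\<bar>(\<Sum>k\<le>m. (of_int (Lflo m x ! k) / real m - x (k/m)) * Bernstein m k t)\<bar>
              \<le> (\<Sum>k\<le>m. \<bar>(of_int (Lflo m x ! k) / real m - x (k/m)) * Bernstein m k t\<bar>)"
          by (rule sum_abs)
        also have "\<dots> \<le> (\<Sum>k\<le>m. (1 / real m) * Bernstein m k t)"
        proof (rule sum_mono)
          fix k assume k: "k \<in> {..m}"
          have l: "Lflo m x ! k = \<lfloor>real m * x (real k / real m)\<rfloor>"
            using k by (simp add: Lflo_def nth_map less_Suc_eq_le del: upt_Suc)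
          have "\<bar>of_int (Lflo m x ! k) / real m - x (k/m)\<bar> \<le> 1 / real m"
          proof -
            define u where "u = real m * x (real k / real m)"
            have a: "\<bar>of_int \<lfloor>u\<rfloor> - u\<bar> \<le> 1" by linarith
            have "of_int \<lfloor>u\<rfloor> / real m - x (k/m) = (of_int \<lfloor>u\<rfloor> - u) / real m"
              using m(2) by (simp add: u_def field_simps)
            then have "\<bar>of_int \<lfloor>u\<rfloor> / real m - x (k/m)\<bar> = \<bar>of_int \<lfloor>u\<rfloor> - u\<bar> / real m"
              by simp
            also have "\<dots> \<le> 1 / real m" using a m(2) by (intro divide_right_mono) auto
            finally show ?thesis unfolding l u_def .
          qed
          then show "\<bar>(of_int (Lflo m x ! k) / real m - x (k/m)) * Bernstein m k t\<bar> \<le> (1 / real m) * Bernstein m k t"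
            using Bernstein_nonneg[of t m k] t mult_right_mono[of _ "1 / real m" "Bernstein m k t"] by (auto simp: abs_mult)
        qed
        also have "\<dots> = 1 / real m" by (simp only: sum_distrib_left[symmetric] sum_Bernstein)
        finally have 1: "\<bar>(\<Sum>k\<le>m. (of_int (Lflo m x ! k) / real m - x (k/m)) * Bernstein m k t)\<bar> \<le> 1 / real m" .
        have 2: "\<bar>x t - (\<Sum>k\<le>m. x(k/m) * Bernstein m k t)\<bar> < d/2" using N1[OF m(1) t] .
        have "Bpoly m (Lflo m x) t - x t = (\<Sum>k\<le>m. (of_int (Lflo m x ! k) / real m - x (k/m)) * Bernstein m k t)
              - (x t - (\<Sum>k\<le>m. x(k/m) * Bernstein m k t))"
          using t by (simp add: Bpoly_def algebra_simps sum_subtractf)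
        then show "\<bar>Bpoly m (Lflo m x) t - x t\<bar> \<le> 1 / real m + d / 2" using 1 2 by linarith
      qed
      then have "supn (\<lambda>t. Bpoly m (Lflo m x) t - x t) < d" using im by linarith
      from d(2)[OF Bpoly_C01 this] show "norm (f (Bpoly (Suc n) (Lflo (Suc n) x)) - f x) < e"
        by (simp add: m_def)
    qed
  qed
qed


definition pinf :: "real \<Rightarrow> real \<Rightarrow> (real \<Rightarrow> real) \<Rightarrow> real" where
  "pinf a b x = (INF t\<in>{max 0 a..min 1 b}. x t)"

lemma gmin_pinf: "gmin x = pinf 0 1 x" by (simp add: gmin_def pinf_def)

lemma pinf_facts:
  assumes x: "x \<in> C01" and ab: "max 0 a \<le> min 1 b"
  shows "bdd_below (x ` {max 0 a..min 1 b})"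
    and "\<And>t. t \<in> {max 0 a..min 1 b} \<Longrightarrow> pinf a b x \<le> x t"
    and "\<exists>t\<in>{max 0 a..min 1 b}. x t = pinf a b x"
proof -
  have c: "continuous_on {max 0 a..min 1 b} x"
    using C01_cont[OF x] by (rule continuous_on_subset) auto
  then have "compact (x ` {max 0 a..min 1 b})" by (intro compact_continuous_image) auto
  then show bb: "bdd_below (x ` {max 0 a..min 1 b})" by (intro bounded_imp_bdd_below compact_imp_bounded)
  show "\<And>t. t \<in> {max 0 a..min 1 b} \<Longrightarrow> pinf a b x \<le> x t"
    unfolding pinf_def by (rule cINF_lower[OF bb])
  from continuous_attains_inf[OF compact_Icc _ c] ab obtain t where
    t: "t \<in> {max 0 a..min 1 b}" "\<And>s. s \<in> {max 0 a..min 1 b} \<Longrightarrow> x t \<le> x s" by auto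
  have "pinf a b x = x t" unfolding pinf_def
    by (rule antisym) (auto intro!: cINF_lower[OF bb] cINF_greatest t)
  then show "\<exists>t\<in>{max 0 a..min 1 b}. x t = pinf a b x" using t by auto
qed

lemma supn_sym: "supn (\<lambda>t. x t - y t) = supn (\<lambda>t. y t - x t)"
  unfolding supn_def by (simp add: abs_minus_commute)

lemma pinf_lip:
  assumes x: "x \<in> C01" and y: "y \<in> C01" and ab: "max 0 a \<le> min 1 b"
  shows "\<bar>pinf a b y - pinf a b x\<bar> \<le> supn (\<lambda>t. y t - x t)"
proof -
  have s: "\<And>t. t \<in> {0..1} \<Longrightarrow> \<bar>y t - x t\<bar> \<le> supn (\<lambda>t. y t - x t)"
    using abs_le_supn[OF C01_diff[OF x y]] by auto
  have 1: "pinf a b x - supn (\<lambda>t. y t - x t) \<le> pinf a b y"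
  proof -
    have "pinf a b x - supn (\<lambda>t. y t - x t) \<le> (INF t\<in>{max 0 a..min 1 b}. y t)"
    proof (rule cINF_greatest)
      fix t assume t: "t \<in> {max 0 a..min 1 b}"
      then have "t \<in> {0..1}" by auto
      from s[OF this] pinf_facts(2)[OF x ab t] show "pinf a b x - supn (\<lambda>t. y t - x t) \<le> y t" by linarith
    qed (use ab in auto)
    then show ?thesis by (simp add: pinf_def)
  qed
  have 2: "pinf a b y - supn (\<lambda>t. y t - x t) \<le> pinf a b x"
  proof -
    have "pinf a b y - supn (\<lambda>t. y t - x t) \<le> (INF t\<in>{max 0 a..min 1 b}. x t)"
    proof (rule cINF_greatest)
      fix t assume t: "t \<in> {max 0 a..min 1 b}"
      then have "t \<in> {0..1}" by auto
      from s[OF this] pinf_facts(2)[OF y ab t] show "pinf a b y - supn (\<lambda>t. y t - x t) \<le> x t" by linarith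
    qed (use ab in auto)
    then show ?thesis by (simp add: pinf_def)
  qed
  from 1 2 show ?thesis by linarith
qed

lemma pinf_meas[measurable]: "pinf a b \<in> borel_measurable E_sets"
proof (cases "max 0 a \<le> min 1 b")
  case True
  show ?thesis
  proof (rule supcont_meas)
    fix x e assume "x \<in> C01" "(e::real) > 0"
    then show "\<exists>d>0. \<forall>y\<in>C01. supn (\<lambda>t. y t - x t) < d \<longrightarrow> \<bar>pinf a b y - pinf a b x\<bar> < e"
      using pinf_lip[OF _ _ True] by (intro exI[of _ e]) force
  qed
next
  case False
  then have "pinf a b = (\<lambda>x. Inf {})" by (auto simp: pinf_def fun_eq_iff)
  then show ?thesis by simp
qed

lemma gmin_meas[measurable]: "gmin \<in> borel_measurable E_sets"
  unfolding gmin_pinf[abs_def] by measurable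

lemma pinf_eq_meas[measurable]: "Measurable.pred E_sets (\<lambda>x. pinf a b x = gmin x)"
  unfolding pred_def by (rule borel_measurable_eq[OF pinf_meas gmin_meas])

definition Uniq :: "(real \<Rightarrow> real) \<Rightarrow> bool" where
  "Uniq x \<longleftrightarrow> (\<exists>!t. t \<in> {0..1} \<and> x t = gmin x)"

lemma Uniq_char:
  assumes x: "x \<in> C01"
  shows "\<not> Uniq x \<longleftrightarrow> (\<exists>q1 q2::rat. 0 \<le> q1 \<and> q1 < q2 \<and> q2 \<le> 1 \<and>
      pinf 0 (of_rat q1) x = gmin x \<and> pinf (of_rat q2) 1 x = gmin x)"
proof
  have g: "\<exists>t\<in>{0..1}. x t = gmin x" using pinf_facts(3)[OF x, of 0 1] by (simp add: gmin_pinf)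
  have gl: "\<And>t. t \<in> {0..1} \<Longrightarrow> gmin x \<le> x t" using pinf_facts(2)[OF x, of 0 1] by (simp add: gmin_pinf)
  assume "\<not> Uniq x"
  then obtain t1 t2 where t: "t1 \<in> {0..1}" "t2 \<in> {0..1}" "x t1 = gmin x" "x t2 = gmin x" "t1 \<noteq> t2"
  proof -
    from g obtain t1 where t1: "t1 \<in> {0..1}" "x t1 = gmin x" by blast
    from \<open>\<not> Uniq x\<close> have "\<not> (\<forall>t. t \<in> {0..1} \<and> x t = gmin x \<longrightarrow> t = t1)"
      unfolding Uniq_def using t1 by blast
    then obtain t2 where "t2 \<in> {0..1}" "x t2 = gmin x" "t2 \<noteq> t1" by blast
    then show ?thesis using that[of t1 t2] t1 by blast
  qed
  then obtain s1 s2 where s: "s1 \<in> {0..1}" "s2 \<in> {0..1}" "x s1 = gmin x" "x s2 = gmin x" "s1 < s2"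
  proof (cases "t1 < t2")
    case True then show ?thesis using that[of t1 t2] t by auto
  next
    case False then show ?thesis using that[of t2 t1] t by auto
  qed
  obtain q1 where q1: "q1 \<in> \<rat>" "s1 < q1" "q1 < s2" using Rats_dense_in_real[OF s(5)] by blast
  obtain q2 where q2: "q2 \<in> \<rat>" "q1 < q2" "q2 < s2" using Rats_dense_in_real[OF q1(3)] by blast
  from q1(1) obtain r1 where r1: "q1 = of_rat r1" by (auto elim: Rats_cases)
  from q2(1) obtain r2 where r2: "q2 = of_rat r2" by (auto elim: Rats_cases)
  have p1: "pinf 0 q1 x = gmin x"
  proof (rule antisym)
    show "pinf 0 q1 x \<le> gmin x" using pinf_facts(2)[OF x, of 0 q1 s1] s q1 by auto
    have "max 0 0 \<le> min 1 q1" using s q1 by auto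
    from pinf_facts(3)[OF x this] obtain t where t: "t \<in> {max 0 0..min 1 q1}" "x t = pinf 0 q1 x" by blast
    then have "t \<in> {0..1}" by auto
    with gl t show "gmin x \<le> pinf 0 q1 x" by force
  qed
  have p2: "pinf q2 1 x = gmin x"
  proof (rule antisym)
    show "pinf q2 1 x \<le> gmin x" using pinf_facts(2)[OF x, of q2 1 s2] s q2 by auto
    have "max 0 q2 \<le> min 1 1" using s q2 by auto
    from pinf_facts(3)[OF x this] obtain t where t: "t \<in> {max 0 q2..min 1 1}" "x t = pinf q2 1 x" by blast
    then have "t \<in> {0..1}" using s q1 q2 by auto
    with gl t show "gmin x \<le> pinf q2 1 x" by force
  qed
  show "\<exists>q1 q2::rat. 0 \<le> q1 \<and> q1 < q2 \<and> q2 \<le> 1 \<and>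
      pinf 0 (of_rat q1) x = gmin x \<and> pinf (of_rat q2) 1 x = gmin x"
  proof -
    have "0 \<le> s1" using s by auto
    then have "(0::real) \<le> of_rat r1" using s q1 r1 by linarith
    then have h1: "0 \<le> r1" by simp
    have "(of_rat r1::real) < of_rat r2" using q2 r1 r2 by simp
    then have h2: "r1 < r2" by (simp add: of_rat_less)
    have "s2 \<le> 1" using s by auto
    then have "(of_rat r2::real) \<le> 1" using q2 s r2 by linarith
    then have h3: "r2 \<le> 1" by simp
    show ?thesis using h1 h2 h3 p1 p2 r1 r2 by blast
  qed
next
  assume "\<exists>q1 q2::rat. 0 \<le> q1 \<and> q1 < q2 \<and> q2 \<le> 1 \<and>
      pinf 0 (of_rat q1) x = gmin x \<and> pinf (of_rat q2) 1 x = gmin x"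
  then obtain r1 r2 :: rat where r: "0 \<le> r1" "r1 < r2" "r2 \<le> 1" "pinf 0 (of_rat r1) x = gmin x" "pinf (of_rat r2) 1 x = gmin x"
    by blast
  define q1 :: real where "q1 = of_rat r1"
  define q2 :: real where "q2 = of_rat r2"
  have q: "0 \<le> q1" "q1 < q2" "q2 \<le> 1" "pinf 0 q1 x = gmin x" "pinf q2 1 x = gmin x"
    using r by (simp_all add: q1_def q2_def of_rat_less)
  have "max 0 0 \<le> min 1 q1" using q by simp
  from pinf_facts(3)[OF x this] obtain t1 where t1': "t1 \<in> {max 0 0..min 1 q1}" "x t1 = pinf 0 q1 x" by blast
  have t1: "t1 \<in> {0..q1}" "x t1 = gmin x" using t1' q by auto
  have "max 0 q2 \<le> min 1 1" using q by simp
  from pinf_facts(3)[OF x this] obtain t2 where t2': "t2 \<in> {max 0 q2..min 1 1}" "x t2 = pinf q2 1 x" by blast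
  have t2: "t2 \<in> {q2..1}" "x t2 = gmin x" using t2' q by auto
  have "t1 < t2" using t1 t2 q by auto
  show "\<not> Uniq x"
  proof
    assume "Uniq x"
    then obtain t0 where "\<And>t. t \<in> {0..1} \<and> x t = gmin x \<Longrightarrow> t = t0" unfolding Uniq_def by blast
    then have "t1 = t0" "t2 = t0" using t1 t2 q by auto
    with \<open>t1 < t2\<close> show False by simp
  qed
qed

lemma Uniq_meas[measurable]: "Measurable.pred E_sets Uniq"
proof -
  define P where "P = (\<lambda>x. \<not> (\<exists>q1 q2::rat. 0 \<le> q1 \<and> q1 < q2 \<and> q2 \<le> 1 \<and>
      pinf 0 (of_rat q1) x = gmin x \<and> pinf (of_rat q2) 1 x = gmin x))"
  have meas: "Measurable.pred E_sets P" unfolding P_def by measurable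
  have eq: "\<And>w. w \<in> space E_sets \<Longrightarrow> P w = Uniq w"
  proof -
    fix w assume "w \<in> space E_sets"
    then have w: "w \<in> C01" by (simp add: space_E)
    show "P w = Uniq w" unfolding P_def by (subst Uniq_char[OF w, symmetric]) simp
  qed
  have "Measurable.pred E_sets P = Measurable.pred E_sets Uniq"
    by (rule measurable_cong) (rule eq)
  with meas show ?thesis by simp
qed

lemma tau_le:
  assumes x: "x \<in> C01"
  shows "tau x \<le> a \<longleftrightarrow> (Uniq x \<and> (1 \<le> a \<or> (0 \<le> a \<and> pinf 0 a x = gmin x))) \<or> (\<not> Uniq x \<and> 0 \<le> a)"
proof (cases "Uniq x")
  case False
  then have "tau x = 0" unfolding tau_def Uniq_def by argo
  then show ?thesis using False by simp
next
  case True
  then obtain t0 where t0: "t0 \<in> {0..1}" "x t0 = gmin x" "\<And>s. s \<in> {0..1} \<Longrightarrow> x s = gmin x \<Longrightarrow> s = t0"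
    unfolding Uniq_def by blast
  have "(THE t. t \<in> {0..1} \<and> x t = gmin x) = t0"
    by (rule the_equality) (use t0 in blast)+
  then have tt: "tau x = t0" unfolding tau_def using True unfolding Uniq_def by simp
  have gl: "\<And>t. t \<in> {0..1} \<Longrightarrow> gmin x \<le> x t" using pinf_facts(2)[OF x, of 0 1] by (simp add: gmin_pinf)
  have t01: "0 \<le> t0" "t0 \<le> 1" using t0(1) by auto
  show ?thesis
  proof (cases "1 \<le> a")
    case True then show ?thesis using t01 tt \<open>Uniq x\<close> by simp
  next
    case a1: False
    show ?thesis
    proof (cases "0 \<le> a")
      case False then show ?thesis using t01 tt \<open>Uniq x\<close> by simp
    next
      case a0: True
      have ab: "max 0 0 \<le> min 1 a" using a0 by simp
      have "t0 \<le> a \<longleftrightarrow> pinf 0 a x = gmin x"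
      proof
        assume "t0 \<le> a"
        show "pinf 0 a x = gmin x"
        proof (rule antisym)
          have "t0 \<in> {max 0 0..min 1 a}" using t01 \<open>t0 \<le> a\<close> by simp
          from pinf_facts(2)[OF x ab this] t0(2) show "pinf 0 a x \<le> gmin x" by simp
          from pinf_facts(3)[OF x ab] obtain t where "t \<in> {max 0 0..min 1 a}" "x t = pinf 0 a x" by blast
          moreover from this(1) have "t \<in> {0..1}" by simp
          ultimately show "gmin x \<le> pinf 0 a x" using gl by metis
        qed
      next
        assume pa: "pinf 0 a x = gmin x"
        from pinf_facts(3)[OF x ab] obtain t where t: "t \<in> {max 0 0..min 1 a}" "x t = pinf 0 a x" by blast
        then have "t \<in> {0..1}" "t \<le> a" by simp_all
        moreover have "x t = gmin x" using t pa by simp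
        ultimately have "t = t0" using t0(3) by blast
        then show "t0 \<le> a" using \<open>t \<le> a\<close> by simp
      qed
      then show ?thesis using tt True a1 a0 by simp
    qed
  qed
qed

lemma tau_meas[measurable]: "tau \<in> borel_measurable E_sets"
proof (subst borel_measurable_iff_le, intro allI)
  fix a
  have "{w \<in> space E_sets. tau w \<le> a} = {w \<in> space E_sets.
      (Uniq w \<and> (1 \<le> a \<or> (0 \<le> a \<and> pinf 0 a w = gmin w))) \<or> (\<not> Uniq w \<and> 0 \<le> a)}"
  proof (rule Collect_cong)
    fix w
    show "(w \<in> space E_sets \<and> tau w \<le> a) = (w \<in> space E_sets \<and>
      ((Uniq w \<and> (1 \<le> a \<or> (0 \<le> a \<and> pinf 0 a w = gmin w))) \<or> (\<not> Uniq w \<and> 0 \<le> a)))"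
      using tau_le[of w a] by (cases "w \<in> space E_sets") (simp_all add: space_E)
  qed
  also have "\<dots> \<in> sets E_sets" by measurable
  finally show "{w \<in> space E_sets. tau w \<le> a} \<in> sets E_sets" .
qed

lemma tau_range: "tau x \<in> {0..1}"
proof (cases "\<exists>!t. t \<in> {0..1} \<and> x t = gmin x")
  case True
  then show ?thesis unfolding tau_def by (metis (mono_tags, lifting) theI')
qed (simp add: tau_def)

lemma C01_borel: "z \<in> C01 \<Longrightarrow> z \<in> borel_measurable borel"
proof -
  assume z: "z \<in> C01"
  have "(\<lambda>t. indicator {0..1} t *\<^sub>R z t) \<in> borel_measurable borel"
    by (rule borel_measurable_continuous_on_indicator) (auto simp: C01_cont[OF z])
  moreover have "(\<lambda>t. indicator {0..1} t *\<^sub>R z t) = z"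
    using C01_out[OF z] by (auto simp: fun_eq_iff indicator_def)
  ultimately show ?thesis by simp
qed

lemma ztau_meas: "z \<in> C01 \<Longrightarrow> (\<lambda>x. z (tau x)) \<in> borel_measurable E_sets"
  using measurable_compose[OF tau_meas C01_borel] by simp


locale setting =
  fixes \<mu> :: "(real \<Rightarrow> real) measure" and e :: "nat \<Rightarrow> real \<Rightarrow> real" and lam :: "nat \<Rightarrow> real"
    and \<rho> :: "real \<Rightarrow> real"
    and \<phi> :: "(real \<Rightarrow> real) \<Rightarrow> real" and D\<phi> :: "(real \<Rightarrow> real) \<Rightarrow> (real \<Rightarrow> real) \<Rightarrow> real"
    and z :: "real \<Rightarrow> real" and W :: "(real \<Rightarrow> real) \<Rightarrow> real"
  assumes gauss: "gaussian_on_E \<mu> e lam" and H2: "H2 \<mu> e lam \<rho>" and C1: "C1b \<phi> D\<phi>"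
    and zCM: "z \<in> CM e lam" and QW: "is_QW \<mu> e lam z W"
begin

lemma P: "prob_space \<mu>" using gauss by (simp add: gaussian_on_E_def)
lemma sp: "space \<mu> = C01" using gauss by (simp add: gaussian_on_E_def)
lemma st: "sets \<mu> = sets E_sets" using gauss by (simp add: gaussian_on_E_def)

interpretation prob_space \<mu> by (rule P)

lemma mE: fixes h :: "(real \<Rightarrow> real) \<Rightarrow> real"
  shows "h \<in> borel_measurable E_sets \<Longrightarrow> h \<in> borel_measurable \<mu>"
  using measurable_cong_sets[OF st, of "borel :: real measure" "borel :: real measure"] by simp

lemma zC: "z \<in> C01" using zCM by (simp add: CM_def)

lemma rho_meas[measurable]: "\<rho> \<in> borel_measurable borel" using H2 by (simp add: H2_def)
lemma rho_nn: "0 \<le> \<rho> r" using H2 by (simp add: H2_def)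
lemma law: "A \<in> sets borel \<Longrightarrow> A \<subseteq> {..0} \<Longrightarrow>
   emeasure \<mu> {x\<in>space \<mu>. gmin x \<in> A} = (\<integral>\<^sup>+ r. ennreal (\<rho> r) * indicator A r \<partial>lborel)"
  using H2 by (simp add: H2_def)
lemma ibp: shows "C1b \<psi> D\<psi> \<Longrightarrow> L-lipschitz_on UNIV \<theta> \<Longrightarrow> \<theta>' \<in> borel_measurable borel \<Longrightarrow>
        N \<in> null_sets lborel \<Longrightarrow> (\<forall>s. s \<notin> N \<longrightarrow> (\<theta> has_real_derivative \<theta>' s) (at s)) \<Longrightarrow>
        (AE x in \<mu>. gmin x \<notin> N) \<Longrightarrow>
        (\<integral>x. D\<psi> x z * \<theta> (gmin x) + \<psi> x * \<theta>' (gmin x) * z (tau x) \<partial>\<mu>)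
          = (\<integral>x. W x * \<psi> x * \<theta> (gmin x) \<partial>\<mu>)"
proof -
  have "\<forall>\<psi> D\<psi> \<theta> \<theta>' N z W L. C1b \<psi> D\<psi> \<longrightarrow> z \<in> CM e lam \<longrightarrow> is_QW \<mu> e lam z W \<longrightarrow>
        L-lipschitz_on UNIV \<theta> \<longrightarrow> \<theta>' \<in> borel_measurable borel \<longrightarrow>
        N \<in> null_sets lborel \<longrightarrow> (\<forall>s. s \<notin> N \<longrightarrow> (\<theta> has_real_derivative \<theta>' s) (at s)) \<longrightarrow>
        (AE x in \<mu>. gmin x \<notin> N) \<longrightarrow>
        (\<integral>x. D\<psi> x z * \<theta> (gmin x) + \<psi> x * \<theta>' (gmin x) * z (tau x) \<partial>\<mu>)
          = (\<integral>x. W x * \<psi> x * \<theta> (gmin x) \<partial>\<mu>)"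
    using H2 unfolding H2_def by (elim conjE)
  from this[rule_format, OF _ zCM QW] show "C1b \<psi> D\<psi> \<Longrightarrow> L-lipschitz_on UNIV \<theta> \<Longrightarrow> \<theta>' \<in> borel_measurable borel \<Longrightarrow>
        N \<in> null_sets lborel \<Longrightarrow> (\<forall>s. s \<notin> N \<longrightarrow> (\<theta> has_real_derivative \<theta>' s) (at s)) \<Longrightarrow>
        (AE x in \<mu>. gmin x \<notin> N) \<Longrightarrow>
        (\<integral>x. D\<psi> x z * \<theta> (gmin x) + \<psi> x * \<theta>' (gmin x) * z (tau x) \<partial>\<mu>)
          = (\<integral>x. W x * \<psi> x * \<theta> (gmin x) \<partial>\<mu>)" by blast
qed

lemma g_meas[measurable]: "gmin \<in> borel_measurable \<mu>" by (rule mE) simp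
lemma tau_meas_mu[measurable]: "tau \<in> borel_measurable \<mu>" by (rule mE) simp

lemma W_meas[measurable]: "W \<in> borel_measurable \<mu>" using QW unfolding is_QW_def by (elim conjE)
lemma W_sq: "integrable \<mu> (\<lambda>x. (W x)\<^sup>2)" using QW unfolding is_QW_def by (elim conjE)
lemma W_int: "integrable \<mu> W"
  by (rule square_integrable_imp_integrable[OF W_meas W_sq])

lemma c1: "\<exists>B. \<forall>x\<in>C01. \<bar>\<phi> x\<bar> \<le> B"
  using C1 unfolding C1b_def by (rule conjunct1)
lemma c3: "\<exists>C. \<forall>x\<in>C01. \<forall>z\<in>C01. \<bar>D\<phi> x z\<bar> \<le> C * supn z"
  using C1 unfolding C1b_def by (elim conjE)
lemma c4: "\<forall>x\<in>C01. \<forall>\<epsilon>>0. \<exists>\<delta>>0. \<forall>h\<in>C01. supn h < \<delta> \<longrightarrow>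
        \<bar>\<phi> (\<lambda>t. x t + h t) - \<phi> x - D\<phi> x h\<bar> \<le> \<epsilon> * supn h"
  using C1 unfolding C1b_def by (elim conjE)
lemma c5: "\<forall>x\<in>C01. \<forall>\<epsilon>>0. \<exists>\<delta>>0. \<forall>y\<in>C01. supn (\<lambda>t. y t - x t) < \<delta> \<longrightarrow>
        (\<forall>z\<in>C01. \<bar>D\<phi> y z - D\<phi> x z\<bar> \<le> \<epsilon> * supn z)"
  using C1 unfolding C1b_def by (elim conjE)

lemma phi_bound: obtains B where "\<And>x. x \<in> space \<mu> \<Longrightarrow> \<bar>\<phi> x\<bar> \<le> B"
proof -
  from c1 obtain B where "\<forall>x\<in>C01. \<bar>\<phi> x\<bar> \<le> B" by blast
  then show ?thesis using that[of B] by (simp add: sp)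
qed

lemma Dphi_bound: obtains C where "\<And>x y. x \<in> C01 \<Longrightarrow> y \<in> C01 \<Longrightarrow> \<bar>D\<phi> x y\<bar> \<le> C * supn y"
proof -
  from c3 obtain C where "\<forall>x\<in>C01. \<forall>z\<in>C01. \<bar>D\<phi> x z\<bar> \<le> C * supn z" by blast
  then show ?thesis using that[of C] by blast
qed

lemma frechet: "x \<in> C01 \<Longrightarrow> \<epsilon> > 0 \<Longrightarrow> \<exists>\<delta>>0. \<forall>h\<in>C01. supn h < \<delta> \<longrightarrow>
        \<bar>\<phi> (\<lambda>t. x t + h t) - \<phi> x - D\<phi> x h\<bar> \<le> \<epsilon> * supn h"
  using c4 by blast

lemma Dcont: "x \<in> C01 \<Longrightarrow> \<epsilon> > 0 \<Longrightarrow> \<exists>\<delta>>0. \<forall>y\<in>C01. supn (\<lambda>t. y t - x t) < \<delta> \<longrightarrow>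
        (\<forall>z\<in>C01. \<bar>D\<phi> y z - D\<phi> x z\<bar> \<le> \<epsilon> * supn z)"
  using c5 by blast

lemma phi_measE: "\<phi> \<in> borel_measurable E_sets"
proof (rule supcont_meas)
  fix x and e :: real assume x: "x \<in> C01" and e: "(e::real) > 0"
  obtain C where C: "\<And>x y. x \<in> C01 \<Longrightarrow> y \<in> C01 \<Longrightarrow> \<bar>D\<phi> x y\<bar> \<le> C * supn y" using Dphi_bound by blast
  obtain \<delta> where d: "\<delta> > 0" "\<And>h. h\<in>C01 \<Longrightarrow> supn h < \<delta> \<Longrightarrow>
        \<bar>\<phi> (\<lambda>t. x t + h t) - \<phi> x - D\<phi> x h\<bar> \<le> 1 * supn h"
    using frechet[OF x, of 1] by auto
  define d' where "d' = min \<delta> (e / (\<bar>C\<bar> + 2))"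
  have d'pos: "d' > 0" using d e by (simp add: d'_def)
  show "\<exists>d>0. \<forall>y\<in>C01. supn (\<lambda>t. y t - x t) < d \<longrightarrow> \<bar>\<phi> y - \<phi> x\<bar> < e"
  proof (intro exI[of _ d'] conjI ballI impI d'pos)
    fix y assume y: "y \<in> C01" and s: "supn (\<lambda>t. y t - x t) < d'"
    define h where "h = (\<lambda>t. y t - x t)"
    have h: "h \<in> C01" unfolding h_def by (rule C01_diff[OF x y])
    have xh: "(\<lambda>t. x t + h t) = y" by (simp add: h_def)
    have s0: "0 \<le> supn h" by (rule supn_nonneg[OF h])
    have s1: "supn h < \<delta>" "supn h < e / (\<bar>C\<bar> + 2)" using s by (auto simp: h_def d'_def)
    have "\<bar>\<phi> y - \<phi> x - D\<phi> x h\<bar> \<le> supn h" using d(2)[OF h s1(1)] xh by simp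
    moreover have "\<bar>D\<phi> x h\<bar> \<le> \<bar>C\<bar> * supn h"
      using C[OF x h] s0 by (meson abs_ge_self dual_order.trans mult_right_mono)
    ultimately have "\<bar>\<phi> y - \<phi> x\<bar> \<le> (\<bar>C\<bar> + 1) * supn h" by (simp add: algebra_simps)
    also have "\<dots> \<le> (\<bar>C\<bar> + 2) * supn h" using s0 by (intro mult_right_mono) auto
    also have "\<dots> < (\<bar>C\<bar> + 2) * (e / (\<bar>C\<bar> + 2))"
      using s1(2) by (intro mult_strict_left_mono) auto
    also have "\<dots> = e" by simp
    finally show "\<bar>\<phi> y - \<phi> x\<bar> < e" .
  qed
qed

lemma phi_meas[measurable]: "\<phi> \<in> borel_measurable \<mu>" by (rule mE[OF phi_measE])

lemma Dz_measE: "(\<lambda>x. D\<phi> x z) \<in> borel_measurable E_sets"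
proof (rule supcont_meas)
  fix x and e :: real assume x: "x \<in> C01" and e: "(e::real) > 0"
  have s0: "0 \<le> supn z" by (rule supn_nonneg[OF zC])
  obtain \<delta> where d: "\<delta> > 0" "\<And>y. y\<in>C01 \<Longrightarrow> supn (\<lambda>t. y t - x t) < \<delta> \<Longrightarrow>
        (\<forall>w\<in>C01. \<bar>D\<phi> y w - D\<phi> x w\<bar> \<le> (e / (supn z + 1)) * supn w)"
    using Dcont[OF x, of "e / (supn z + 1)"] e s0 by auto
  show "\<exists>d>0. \<forall>y\<in>C01. supn (\<lambda>t. y t - x t) < d \<longrightarrow> \<bar>D\<phi> y z - D\<phi> x z\<bar> < e"
  proof (intro exI[of _ \<delta>] conjI ballI impI d(1))
    fix y assume "y \<in> C01" "supn (\<lambda>t. y t - x t) < \<delta>"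
    then have "\<bar>D\<phi> y z - D\<phi> x z\<bar> \<le> (e / (supn z + 1)) * supn z" using d(2) zC by blast
    also have "\<dots> < e" using e s0 by (simp add: field_simps)
    finally show "\<bar>D\<phi> y z - D\<phi> x z\<bar> < e" .
  qed
qed

lemma Dz_meas[measurable]: "(\<lambda>x. D\<phi> x z) \<in> borel_measurable \<mu>" by (rule mE[OF Dz_measE])

lemma ztau_meas_mu[measurable]: "(\<lambda>x. z (tau x)) \<in> borel_measurable \<mu>"
  by (rule mE[OF ztau_meas[OF zC]])

lemma Dz_bound: obtains K where "\<And>x. x \<in> space \<mu> \<Longrightarrow> \<bar>D\<phi> x z\<bar> \<le> K"
proof -
  obtain C where "\<And>x y. x \<in> C01 \<Longrightarrow> y \<in> C01 \<Longrightarrow> \<bar>D\<phi> x y\<bar> \<le> C * supn y" using Dphi_bound by blast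
  then show ?thesis using that[of "C * supn z"] zC by (auto simp: sp)
qed

lemma ztau_bound: "\<bar>z (tau x)\<bar> \<le> supn z"
  using abs_le_supn[OF zC tau_range] .

definition f where "f x = D\<phi> x z - W x * \<phi> x"
definition Y where "Y x = z (tau x) * \<phi> x"

lemma f_meas[measurable]: "f \<in> borel_measurable \<mu>" unfolding f_def[abs_def] by measurable
lemma Y_meas[measurable]: "Y \<in> borel_measurable \<mu>" unfolding Y_def[abs_def] by measurable

lemma bdd_int:
  fixes h :: "(real \<Rightarrow> real) \<Rightarrow> real" and K :: real
  assumes [measurable]: "h \<in> borel_measurable \<mu>" and "\<And>x. x \<in> space \<mu> \<Longrightarrow> \<bar>h x\<bar> \<le> K"
  shows "integrable \<mu> h"
  by (rule integrable_const_bound[where B=K]) (use assms in auto)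

lemma Wphi_int: "integrable \<mu> (\<lambda>x. W x * \<phi> x)"
proof -
  obtain B where B: "\<And>x. x \<in> space \<mu> \<Longrightarrow> \<bar>\<phi> x\<bar> \<le> B" using phi_bound by blast
  have i: "integrable \<mu> (\<lambda>x. B * W x)" using W_int by simp
  have ae: "AE x in \<mu>. norm (W x * \<phi> x) \<le> norm (B * W x)"
  proof (rule AE_I2)
    fix x assume "x \<in> space \<mu>"
    then have "\<bar>\<phi> x\<bar> \<le> \<bar>B\<bar>" using B by fastforce
    then show "norm (W x * \<phi> x) \<le> norm (B * W x)"
      using mult_left_mono[of "\<bar>\<phi> x\<bar>" "\<bar>B\<bar>" "\<bar>W x\<bar>"] by (simp add: abs_mult mult.commute)
  qed
  show ?thesis using Bochner_Integration.integrable_bound[OF i _ ae] by simp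
qed

lemma Dz_int: "integrable \<mu> (\<lambda>x. D\<phi> x z)"
proof -
  obtain K where K: "\<And>x. x \<in> space \<mu> \<Longrightarrow> \<bar>D\<phi> x z\<bar> \<le> K" using Dz_bound by blast
  show ?thesis by (rule bdd_int[OF Dz_meas K])
qed

lemma f_int: "integrable \<mu> f"
  unfolding f_def[abs_def] using Dz_int Wphi_int by simp

lemma Y_int: "integrable \<mu> Y"
proof -
  obtain B where B: "\<And>x. x \<in> space \<mu> \<Longrightarrow> \<bar>\<phi> x\<bar> \<le> B" using phi_bound by blast
  show ?thesis
  proof (rule bdd_int[where K="supn z * B"])
    fix x assume "x \<in> space \<mu>"
    then show "\<bar>Y x\<bar> \<le> supn z * B" unfolding Y_def abs_mult
      using B ztau_bound supn_nonneg[OF zC] by (intro mult_mono) auto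
  qed simp
qed

end


context setting begin

interpretation prob_space \<mu> by (rule P)

definition Lg where "Lg = density (distr \<mu> borel gmin) (\<lambda>r. ennreal (indicator {..0} r))"
definition Lr where "Lr = density lborel (\<lambda>r. ennreal (\<rho> r * indicator {..0} r))"

lemma Lg_Lr: "Lg = Lr"
proof (rule measure_eqI)
  show "sets Lg = sets Lr" by (simp add: Lg_def Lr_def)
  fix A assume "A \<in> sets Lg"
  then have A[measurable]: "A \<in> sets borel" by (simp add: Lg_def)
  have "emeasure Lg A = (\<integral>\<^sup>+ r. ennreal (indicator {..0} r) * indicator A r \<partial>distr \<mu> borel gmin)"
    unfolding Lg_def by (rule emeasure_density) auto
  also have "\<dots> = (\<integral>\<^sup>+ r. indicator (A \<inter> {..0}) r \<partial>distr \<mu> borel gmin)"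
    by (intro nn_integral_cong) (auto split: split_indicator)
  also have "\<dots> = emeasure (distr \<mu> borel gmin) (A \<inter> {..0})"
    by (rule nn_integral_indicator) simp
  also have "\<dots> = emeasure \<mu> (gmin -` (A \<inter> {..0}) \<inter> space \<mu>)"
    by (rule emeasure_distr) auto
  also have "gmin -` (A \<inter> {..0}) \<inter> space \<mu> = {x\<in>space \<mu>. gmin x \<in> A \<inter> {..0}}" by auto
  also have "emeasure \<mu> \<dots> = (\<integral>\<^sup>+ r. ennreal (\<rho> r) * indicator (A \<inter> {..0}) r \<partial>lborel)"
    by (rule law) auto
  also have "\<dots> = (\<integral>\<^sup>+ r. ennreal (\<rho> r * indicator {..0} r) * indicator A r \<partial>lborel)"
    by (intro nn_integral_cong) (auto split: split_indicator)
  also have "\<dots> = emeasure Lr A"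
    unfolding Lr_def by (rule emeasure_density[symmetric]) auto
  finally show "emeasure Lg A = emeasure Lr A" .
qed

lemma law_real:
  fixes h :: "real \<Rightarrow> real"
  assumes [measurable]: "h \<in> borel_measurable borel"
  shows "integrable \<mu> (\<lambda>x. indicator {..0} (gmin x) * h (gmin x)) \<longleftrightarrow>
         integrable lborel (\<lambda>r. (\<rho> r * indicator {..0} r) * h r)"
    and "(\<integral>x. indicator {..0} (gmin x) * h (gmin x) \<partial>\<mu>) = (\<integral>r. (\<rho> r * indicator {..0} r) * h r \<partial>lborel)"
proof -
  have "integrable Lg h \<longleftrightarrow> integrable (distr \<mu> borel gmin) (\<lambda>r. indicator {..0} r *\<^sub>R h r)"
    unfolding Lg_def by (rule integrable_density) auto
  also have "\<dots> \<longleftrightarrow> integrable \<mu> (\<lambda>x. indicator {..0} (gmin x) * h (gmin x))"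
    by (subst integrable_distr_eq) auto
  finally have 1: "integrable Lg h \<longleftrightarrow> integrable \<mu> (\<lambda>x. indicator {..0} (gmin x) * h (gmin x))" .
  have "integrable Lr h \<longleftrightarrow> integrable lborel (\<lambda>r. (\<rho> r * indicator {..0} r) *\<^sub>R h r)"
    unfolding Lr_def by (rule integrable_density) (auto intro!: AE_I2 mult_nonneg_nonneg rho_nn)
  then have 2: "integrable Lr h \<longleftrightarrow> integrable lborel (\<lambda>r. (\<rho> r * indicator {..0} r) * h r)" by simp
  show "integrable \<mu> (\<lambda>x. indicator {..0} (gmin x) * h (gmin x)) \<longleftrightarrow>
         integrable lborel (\<lambda>r. (\<rho> r * indicator {..0} r) * h r)"
    using 1 2 Lg_Lr by simp
  have "integral\<^sup>L Lg h = integral\<^sup>L (distr \<mu> borel gmin) (\<lambda>r. indicator {..0} r *\<^sub>R h r)"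
    unfolding Lg_def by (rule integral_density) auto
  also have "\<dots> = (\<integral>x. indicator {..0} (gmin x) * h (gmin x) \<partial>\<mu>)"
    by (subst integral_distr) auto
  finally have 3: "integral\<^sup>L Lg h = (\<integral>x. indicator {..0} (gmin x) * h (gmin x) \<partial>\<mu>)" .
  have "integral\<^sup>L Lr h = (\<integral>r. (\<rho> r * indicator {..0} r) *\<^sub>R h r \<partial>lborel)"
    unfolding Lr_def by (rule integral_density) (auto intro!: AE_I2 mult_nonneg_nonneg rho_nn)
  then have 4: "integral\<^sup>L Lr h = (\<integral>r. (\<rho> r * indicator {..0} r) * h r \<partial>lborel)" by simp
  show "(\<integral>x. indicator {..0} (gmin x) * h (gmin x) \<partial>\<mu>) = (\<integral>r. (\<rho> r * indicator {..0} r) * h r \<partial>lborel)"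
    using 3 4 Lg_Lr by simp
qed

lemma null_law:
  assumes A: "A \<in> null_sets lborel" "A \<subseteq> {..0}"
  shows "AE x in \<mu>. gmin x \<notin> A"
proof -
  have Ab[measurable]: "A \<in> sets borel" using A(1) by (simp add: null_sets_def)
  have "emeasure \<mu> {x\<in>space \<mu>. gmin x \<in> A} = (\<integral>\<^sup>+ r. ennreal (\<rho> r) * indicator A r \<partial>lborel)"
    by (rule law) (use A in auto)
  also have "\<dots> = 0"
  proof -
    have "AE r in lborel. ennreal (\<rho> r) * indicator A r = 0"
      using AE_not_in[OF A(1)] by eventually_elim simp
    then show ?thesis by (subst nn_integral_0_iff_AE) auto
  qed
  finally have "emeasure \<mu> {x\<in>space \<mu>. gmin x \<in> A} = 0" .
  then show ?thesis by (subst AE_iff_measurable[of "{x\<in>space \<mu>. gmin x \<in> A}"]) auto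
qed

lemma g_point: "r \<le> 0 \<Longrightarrow> AE x in \<mu>. gmin x \<noteq> r"
  using null_law[of "{r}"] countable_imp_null_set_lborel[of "{r}"] by auto

end


context setting begin

interpretation prob_space \<mu> by (rule P)

lemma int_ind: fixes h :: "(real \<Rightarrow> real) \<Rightarrow> real"
  shows "A \<in> sets \<mu> \<Longrightarrow> integrable \<mu> h \<Longrightarrow> integrable \<mu> (\<lambda>x. indicator A x * h x)"
  using integrable_mult_indicator[of A \<mu> h] by simp

definition F where "F r = - (LINT x:{x\<in>space \<mu>. gmin x \<ge> r}|\<mu>. f x)"

lemma int_f_zero: "(\<integral>x. f x \<partial>\<mu>) = 0"
proof -
  have "(\<integral>x. D\<phi> x z * (\<lambda>_. 1::real) (gmin x) + \<phi> x * (\<lambda>_. 0::real) (gmin x) * z (tau x) \<partial>\<mu>)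
          = (\<integral>x. W x * \<phi> x * (\<lambda>_. 1::real) (gmin x) \<partial>\<mu>)"
  proof (rule ibp[OF C1, of 0 _ _ "{}"])
    show "0-lipschitz_on UNIV (\<lambda>_. 1::real)" by (rule lipschitz_onI) auto
  qed auto
  then have "(\<integral>x. D\<phi> x z \<partial>\<mu>) = (\<integral>x. W x * \<phi> x \<partial>\<mu>)" by simp
  then show ?thesis unfolding f_def using Dz_int Wphi_int by simp
qed

lemma F_alt: "F r = (\<integral>x. indicator {x\<in>space \<mu>. gmin x < r} x * f x \<partial>\<mu>)"
proof -
  have "(\<integral>x. indicator {x\<in>space \<mu>. gmin x < r} x * f x \<partial>\<mu>)
      = (\<integral>x. f x - indicator {x\<in>space \<mu>. gmin x \<ge> r} x * f x \<partial>\<mu>)"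
    by (intro Bochner_Integration.integral_cong) (auto split: split_indicator)
  also have "\<dots> = (\<integral>x. f x \<partial>\<mu>) - (\<integral>x. indicator {x\<in>space \<mu>. gmin x \<ge> r} x * f x \<partial>\<mu>)"
    by (rule Bochner_Integration.integral_diff[OF f_int]) (rule int_ind[OF _ f_int], measurable)
  finally show ?thesis using int_f_zero by (simp add: F_def set_lebesgue_integral_def)
qed

definition th :: "real \<Rightarrow> real \<Rightarrow> real" where "th b s = min (max s b) 0"

lemma th_lip: "1-lipschitz_on UNIV (th b)"
  by (rule lipschitz_onI) (auto simp: th_def dist_real_def min_def max_def abs_if)

lemma th_deriv:
  assumes "b < 0" "s \<notin> {b, 0}"
  shows "(th b has_real_derivative indicator {b<..<0} s) (at s)"
proof -
  consider "s < b" | "b < s" "s < 0" | "0 < s" using assms by fastforce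
  then show ?thesis
  proof cases
    case 1
    have "((\<lambda>_. b) has_real_derivative 0) (at s)" by (rule DERIV_const)
    then have "(th b has_real_derivative 0) (at s)"
      by (rule has_field_derivative_transform_within_open[of _ _ _ "{..<b}"]) (use 1 assms in \<open>auto simp: th_def\<close>)
    then show ?thesis using 1 by simp
  next
    case 2
    have "((\<lambda>x. x) has_real_derivative 1) (at s)" by (rule DERIV_ident)
    then have "(th b has_real_derivative 1) (at s)"
      by (rule has_field_derivative_transform_within_open[of _ _ _ "{b<..<0}"]) (use 2 in \<open>auto simp: th_def\<close>)
    then show ?thesis using 2 by simp
  next
    case 3
    have "((\<lambda>_. 0) has_real_derivative 0) (at s)" by (rule DERIV_const)
    then have "(th b has_real_derivative 0) (at s)"
      by (rule has_field_derivative_transform_within_open[of _ _ _ "{0<..}"]) (use 3 assms in \<open>auto simp: th_def\<close>)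
    then show ?thesis using 3 by simp
  qed
qed

lemma th_meas[measurable]: "th b \<in> borel_measurable borel"
  unfolding th_def[abs_def] by measurable

lemma th_bound: "b < 0 \<Longrightarrow> \<bar>th b s\<bar> \<le> - b"
  by (auto simp: th_def min_def max_def)

lemma ibp_th:
  assumes b: "b < 0"
  shows "(\<integral>x. indicator {b<..<0} (gmin x) * Y x \<partial>\<mu>) = - (\<integral>x. f x * th b (gmin x) \<partial>\<mu>)"
proof -
  have "(\<integral>x. D\<phi> x z * th b (gmin x) + \<phi> x * indicator {b<..<0} (gmin x) * z (tau x) \<partial>\<mu>)
          = (\<integral>x. W x * \<phi> x * th b (gmin x) \<partial>\<mu>)"
  proof (rule ibp[OF C1 th_lip, of _ "{b,0}"])
    show "\<forall>s. s \<notin> {b, 0} \<longrightarrow> (th b has_real_derivative indicator {b<..<0} s) (at s)"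
      using th_deriv[OF b] by blast
    show "{b, 0} \<in> null_sets lborel" by (rule countable_imp_null_set_lborel) auto
    show "AE x in \<mu>. gmin x \<notin> {b, 0}"
    proof -
      have "AE x in \<mu>. gmin x \<noteq> b" using b by (intro g_point) simp
      moreover have "AE x in \<mu>. gmin x \<noteq> 0" by (intro g_point) simp
      ultimately show ?thesis by eventually_elim auto
    qed
  qed auto
  moreover
  have i1: "integrable \<mu> (\<lambda>x. D\<phi> x z * th b (gmin x))"
  proof -
    obtain K where K: "\<And>x. x \<in> space \<mu> \<Longrightarrow> \<bar>D\<phi> x z\<bar> \<le> K" using Dz_bound by blast
    show ?thesis
    proof (rule bdd_int[where K="K * (-b)"])
      fix x assume x: "x \<in> space \<mu>"
      have "0 \<le> K" using K[OF x] by (meson abs_ge_zero order_trans)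
      then show "\<bar>D\<phi> x z * th b (gmin x)\<bar> \<le> K * - b"
        unfolding abs_mult using K[OF x] th_bound[OF b] by (intro mult_mono) auto
    qed simp
  qed
  have i2: "integrable \<mu> (\<lambda>x. \<phi> x * indicator {b<..<0} (gmin x) * z (tau x))"
  proof -
    obtain B where B: "\<And>x. x \<in> space \<mu> \<Longrightarrow> \<bar>\<phi> x\<bar> \<le> B" using phi_bound by blast
    show ?thesis
    proof (rule bdd_int[where K="B * supn z"])
      fix x assume x: "x \<in> space \<mu>"
      have "0 \<le> B" using B[OF x] by (meson abs_ge_zero order_trans)
      have "\<bar>\<phi> x * indicator {b<..<0} (gmin x) * z (tau x)\<bar> \<le> \<bar>\<phi> x\<bar> * \<bar>z (tau x)\<bar>"
        by (auto simp: abs_mult split: split_indicator)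
      also have "\<dots> \<le> B * supn z" using B[OF x] ztau_bound \<open>0 \<le> B\<close> by (intro mult_mono) auto
      finally show "\<bar>\<phi> x * indicator {b<..<0} (gmin x) * z (tau x)\<bar> \<le> B * supn z" .
    qed simp
  qed
  have i3: "integrable \<mu> (\<lambda>x. W x * \<phi> x * th b (gmin x))"
  proof -
    have "AE x in \<mu>. norm (W x * \<phi> x * th b (gmin x)) \<le> norm ((-b) * (W x * \<phi> x))"
    proof (rule AE_I2)
      fix x
      have "\<bar>th b (gmin x)\<bar> * \<bar>W x * \<phi> x\<bar> \<le> (-b) * \<bar>W x * \<phi> x\<bar>"
        using th_bound[OF b] by (intro mult_right_mono) auto
      then show "norm (W x * \<phi> x * th b (gmin x)) \<le> norm ((-b) * (W x * \<phi> x))"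
        using b by (simp add: abs_mult mult_ac)
    qed
    moreover have "integrable \<mu> (\<lambda>x. (-b) * (W x * \<phi> x))" using Wphi_int by simp
    moreover have "(\<lambda>x. W x * \<phi> x * th b (gmin x)) \<in> borel_measurable \<mu>" by measurable
    ultimately show ?thesis using Bochner_Integration.integrable_bound by blast
  qed
  ultimately have "(\<integral>x. \<phi> x * indicator {b<..<0} (gmin x) * z (tau x) \<partial>\<mu>)
     = (\<integral>x. W x * \<phi> x * th b (gmin x) \<partial>\<mu>) - (\<integral>x. D\<phi> x z * th b (gmin x) \<partial>\<mu>)"
    using i1 i2 by (simp add: integral_add)
  also have "\<dots> = (\<integral>x. W x * \<phi> x * th b (gmin x) - D\<phi> x z * th b (gmin x) \<partial>\<mu>)"
    using i1 i3 by simp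
  also have "\<dots> = - (\<integral>x. f x * th b (gmin x) \<partial>\<mu>)"
    by (simp add: f_def algebra_simps flip: integral_minus)
  finally have e: "(\<integral>x. \<phi> x * indicator {b<..<0} (gmin x) * z (tau x) \<partial>\<mu>) = - (\<integral>x. f x * th b (gmin x) \<partial>\<mu>)" .
  have "(\<lambda>x. indicator {b<..<0} (gmin x) * Y x) = (\<lambda>x. \<phi> x * indicator {b<..<0} (gmin x) * z (tau x))"
    by (simp add: Y_def fun_eq_iff)
  with e show ?thesis by simp
qed

end


context setting begin

interpretation prob_space \<mu> by (rule P)

lemma ind_if: fixes b s r :: real shows "indicator {b<..<0} r * (if s < r then 1 else 0) = (indicator {max b s<..<0} r :: real)"
  by (auto split: split_indicator simp: max_def)

lemma meas_Ioo: fixes b s :: real shows "measure lborel {max b s<..<(0::real)} = - th b s"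
proof (cases "max b s \<le> 0")
  case True then show ?thesis by (simp add: th_def max.commute)
next
  case False then have "{max b s<..<(0::real)} = {}" by auto
  with False show ?thesis by (simp add: th_def max.commute)
qed

lemma inner_r: fixes b s c :: real shows "(\<integral>r. c * (indicator {b<..<0} r * (if s < r then 1 else 0)) \<partial>lborel) = c * (- th b s)"
  by (simp add: ind_if meas_Ioo)

lemma inner_x: "(\<integral>x. f x * (indicator {b<..<0} r * (if gmin x < r then 1 else 0)) \<partial>\<mu>) = indicator {b<..<0} r * F r"
proof -
  have "(\<integral>x. f x * (indicator {b<..<0} r * (if gmin x < r then 1 else 0)) \<partial>\<mu>)
      = (\<integral>x. indicator {b<..<0} r * (indicator {x\<in>space \<mu>. gmin x < r} x * f x) \<partial>\<mu>)"
    by (intro Bochner_Integration.integral_cong) (auto split: split_indicator)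
  also have "\<dots> = indicator {b<..<0} r * F r" by (simp add: F_alt)
  finally show ?thesis .
qed

lemma main_id:
  assumes b: "b < 0"
  shows "(\<integral>x. indicator {b<..<0} (gmin x) * Y x \<partial>\<mu>) = (\<integral>r. indicator {b<..<0} r * F r \<partial>lborel)"
proof -
  interpret PS: pair_sigma_finite \<mu> lborel ..
  define k where "k = (\<lambda>x r. f x * (indicator {b<..<0} r * (if gmin x < r then 1 else 0 :: real)))"
  have km[measurable]: "(\<lambda>p. k (fst p) (snd p)) \<in> borel_measurable (\<mu> \<Otimes>\<^sub>M lborel)"
    unfolding k_def by measurable
  have ki: "integrable (\<mu> \<Otimes>\<^sub>M lborel) (\<lambda>(x, r). k x r)"
  proof (rule PS.Fubini_integrable)
    show "(\<lambda>(x, r). k x r) \<in> borel_measurable (\<mu> \<Otimes>\<^sub>M lborel)" using km by (simp add: case_prod_beta')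
    have "(\<lambda>x. \<integral>r. norm ((\<lambda>(x, r). k x r) (x, r)) \<partial>lborel) = (\<lambda>x. \<bar>f x\<bar> * (- th b (gmin x)))"
    proof
      fix x
      have "(\<lambda>r. norm ((\<lambda>(x, r). k x r) (x, r))) = (\<lambda>r. \<bar>f x\<bar> * (indicator {b<..<0} r * (if gmin x < r then 1 else 0)))"
        by (auto simp: k_def abs_mult fun_eq_iff split: split_indicator)
      then show "(\<integral>r. norm ((\<lambda>(x, r). k x r) (x, r)) \<partial>lborel) = \<bar>f x\<bar> * (- th b (gmin x))"
        by (simp only: inner_r)
    qed
    moreover have "integrable \<mu> (\<lambda>x. \<bar>f x\<bar> * (- th b (gmin x)))"
    proof -
      have "integrable \<mu> (\<lambda>x. (-b) * \<bar>f x\<bar>)" using f_int by simp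
      moreover have "AE x in \<mu>. norm (\<bar>f x\<bar> * (- th b (gmin x))) \<le> norm ((-b) * \<bar>f x\<bar>)"
      proof (rule AE_I2)
        fix x
        have "\<bar>f x\<bar> * \<bar>th b (gmin x)\<bar> \<le> \<bar>f x\<bar> * (-b)" using th_bound[OF b] by (intro mult_left_mono) auto
        then show "norm (\<bar>f x\<bar> * (- th b (gmin x))) \<le> norm ((-b) * \<bar>f x\<bar>)" using b by (simp add: abs_mult mult_ac)
      qed
      moreover have "(\<lambda>x. \<bar>f x\<bar> * (- th b (gmin x))) \<in> borel_measurable \<mu>" by measurable
      ultimately show ?thesis using Bochner_Integration.integrable_bound by blast
    qed
    ultimately show "integrable \<mu> (\<lambda>x. \<integral>r. norm ((\<lambda>(x, r). k x r) (x, r)) \<partial>lborel)" by simp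
    show "AE x in \<mu>. integrable lborel (\<lambda>r. (\<lambda>(x, r). k x r) (x, r))"
    proof (rule AE_I2)
      fix x
      have "(\<lambda>r. (\<lambda>(x, r). k x r) (x, r)) = (\<lambda>r. f x * indicator {max b (gmin x)<..<0} r)"
        by (simp add: k_def ind_if)
      moreover have "integrable lborel (\<lambda>r. f x * indicator {max b (gmin x)<..<0} r)"
      proof (intro integrable_mult_right integrable_real_indicator)
        show "emeasure lborel {max b (gmin x)<..<0} < \<infinity>"
          by (cases "max b (gmin x) \<le> 0") auto
      qed simp
      ultimately show "integrable lborel (\<lambda>r. (\<lambda>(x, r). k x r) (x, r))" by simp
    qed
  qed
  have "(\<integral>x. indicator {b<..<0} (gmin x) * Y x \<partial>\<mu>) = - (\<integral>x. f x * th b (gmin x) \<partial>\<mu>)"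
    by (rule ibp_th[OF b])
  also have "\<dots> = (\<integral>x. f x * (- th b (gmin x)) \<partial>\<mu>)"
    by (simp flip: integral_minus)
  also have "\<dots> = (\<integral>x. (\<integral>r. k x r \<partial>lborel) \<partial>\<mu>)"
    unfolding k_def by (simp only: inner_r)
  also have "\<dots> = (\<integral>r. (\<integral>x. k x r \<partial>\<mu>) \<partial>lborel)"
    by (rule PS.Fubini_integral[symmetric]) (use ki in simp)
  also have "\<dots> = (\<integral>r. indicator {b<..<0} r * F r \<partial>lborel)"
    unfolding k_def by (simp only: inner_x)
  finally show ?thesis .
qed

end


context setting begin

interpretation prob_space \<mu> by (rule P)

lemma F_cont: "continuous_on {..<0} F"
proof (rule continuous_on_sequentiallyI)
  fix u :: "nat \<Rightarrow> real" and a assume u: "\<forall>n. u n \<in> {..<0}" and a: "a \<in> {..<0}" and lim: "u \<longlonglongrightarrow> a"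
  have "(\<lambda>n. \<integral>x. indicator {x\<in>space \<mu>. gmin x < u n} x * f x \<partial>\<mu>) \<longlonglongrightarrow> (\<integral>x. indicator {x\<in>space \<mu>. gmin x < a} x * f x \<partial>\<mu>)"
  proof (rule integral_dominated_convergence[where w="\<lambda>x. \<bar>f x\<bar>"])
    show "(\<lambda>x. indicator {x\<in>space \<mu>. gmin x < a} x * f x) \<in> borel_measurable \<mu>" by measurable
    show "\<And>i. (\<lambda>x. indicator {x\<in>space \<mu>. gmin x < u i} x * f x) \<in> borel_measurable \<mu>" by measurable
    show "integrable \<mu> (\<lambda>x. \<bar>f x\<bar>)" using f_int by simp
    show "\<And>i. AE x in \<mu>. norm (indicator {x\<in>space \<mu>. gmin x < u i} x * f x) \<le> \<bar>f x\<bar>"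
      by (intro AE_I2) (auto split: split_indicator)
    have "AE x in \<mu>. gmin x \<noteq> a" using a by (intro g_point) simp
    then show "AE x in \<mu>. (\<lambda>i. indicator {x\<in>space \<mu>. gmin x < u i} x * f x) \<longlonglongrightarrow>
                 indicator {x\<in>space \<mu>. gmin x < a} x * f x"
    proof (rule AE_mp, intro AE_I2 impI)
      fix x assume x: "x \<in> space \<mu>" and ga: "gmin x \<noteq> a"
      show "(\<lambda>i. indicator {x\<in>space \<mu>. gmin x < u i} x * f x) \<longlonglongrightarrow> indicator {x\<in>space \<mu>. gmin x < a} x * f x"
      proof (cases "gmin x < a")
        case True
        have "eventually (\<lambda>n. gmin x < u n) sequentially" by (rule order_tendstoD(1)[OF lim True])
        then have "eventually (\<lambda>n. indicator {x\<in>space \<mu>. gmin x < u n} x * f x = indicator {x\<in>space \<mu>. gmin x < a} x * f x) sequentially"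
          by eventually_elim (use x True in simp)
        then show ?thesis by (rule tendsto_eventually)
      next
        case False
        then have F: "a < gmin x" using ga by simp
        have "eventually (\<lambda>n. u n < gmin x) sequentially" by (rule order_tendstoD(2)[OF lim F])
        then have "eventually (\<lambda>n. indicator {x\<in>space \<mu>. gmin x < u n} x * f x = indicator {x\<in>space \<mu>. gmin x < a} x * f x) sequentially"
          by eventually_elim (use x F in simp)
        then show ?thesis by (rule tendsto_eventually)
      qed
    qed
  qed
  then show "(\<lambda>n. F (u n)) \<longlonglongrightarrow> F a" by (simp add: F_alt)
qed

lemma F_bound: "\<bar>F r\<bar> \<le> (\<integral>x. \<bar>f x\<bar> \<partial>\<mu>)"
proof -
  have "\<bar>F r\<bar> = \<bar>\<integral>x. indicator {x\<in>space \<mu>. gmin x < r} x * f x \<partial>\<mu>\<bar>" by (simp add: F_alt)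
  also have "\<dots> \<le> (\<integral>x. \<bar>indicator {x\<in>space \<mu>. gmin x < r} x * f x\<bar> \<partial>\<mu>)"
    by (rule integral_abs_bound)
  also have "\<dots> \<le> (\<integral>x. \<bar>f x\<bar> \<partial>\<mu>)"
  proof (rule integral_mono)
    show "integrable \<mu> (\<lambda>x. \<bar>indicator {x\<in>space \<mu>. gmin x < r} x * f x\<bar>)"
      using int_ind[OF _ f_int, of "{x\<in>space \<mu>. gmin x < r}"] by simp
  qed (use f_int in \<open>auto split: split_indicator\<close>)
  finally show ?thesis .
qed

definition F0 where "F0 r = indicator {..<0} r *\<^sub>R F r"

lemma F0_meas[measurable]: "F0 \<in> borel_measurable borel"
  unfolding F0_def[abs_def]
  by (rule borel_measurable_continuous_on_indicator) (auto intro: F_cont)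

lemma F0_eq: "r < 0 \<Longrightarrow> F0 r = F r" by (simp add: F0_def)

lemma indF_int: "integrable lborel (\<lambda>r. indicator {b<..<0} r * F r)"
proof -
  have "(\<lambda>r. indicator {b<..<0} r * F r) = (\<lambda>r. indicator {b<..<0} r * F0 r)"
    by (auto simp: fun_eq_iff F0_def split: split_indicator)
  moreover have "integrable lborel (\<lambda>r. indicator {b<..<0} r * F0 r)"
  proof (rule Bochner_Integration.integrable_bound)
    show "integrable lborel (\<lambda>r. (\<integral>x. \<bar>f x\<bar> \<partial>\<mu>) * indicator {b<..<0} r)"
    proof (cases "b \<le> 0")
      case True then show ?thesis by (intro integrable_mult_right integrable_real_indicator) auto
    next
      case False then have "{b<..<0::real} = {}" by auto
      then show ?thesis by simp
    qed
    have [measurable]: "F0 \<in> borel_measurable lborel" using F0_meas by simp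
    show "(\<lambda>r. indicator {b<..<0} r * F0 r) \<in> borel_measurable lborel" by measurable
    show "AE r in lborel. norm (indicator {b<..<0} r * F0 r) \<le> norm ((\<integral>x. \<bar>f x\<bar> \<partial>\<mu>) * indicator {b<..<0} r)"
      using F_bound by (intro AE_I2) (auto simp: F0_def split: split_indicator)
  qed
  ultimately show ?thesis by simp
qed

end

lemma dens_zero_b:
  fixes h :: "real \<Rightarrow> real" and b :: real
  assumes hm[measurable]: "h \<in> borel_measurable borel"
    and hi: "integrable lborel (\<lambda>r. indicator {b<..<0} r * h r)"
    and h0: "\<And>a. b \<le> a \<Longrightarrow> a < 0 \<Longrightarrow> (\<integral>r. indicator {a<..<0} r * h r \<partial>lborel) = 0"
  shows "AE r in lborel. r \<in> {b<..<0} \<longrightarrow> h r = 0"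
proof -
  define hp where "hp r = indicator {b<..<0} r * max 0 (h r)" for r
  define hn where "hn r = indicator {b<..<0} r * max 0 (- h r)" for r
  have [measurable]: "hp \<in> borel_measurable borel" "hn \<in> borel_measurable borel"
    unfolding hp_def[abs_def] hn_def[abs_def] by measurable
  have ip: "integrable lborel (\<lambda>r. hp r * indicator S r)" if [measurable]: "S \<in> sets borel" for S
    by (rule Bochner_Integration.integrable_bound[OF hi]) (auto simp: hp_def split: split_indicator)
  have in_: "integrable lborel (\<lambda>r. hn r * indicator S r)" if [measurable]: "S \<in> sets borel" for S
    by (rule Bochner_Integration.integrable_bound[OF hi]) (auto simp: hn_def split: split_indicator)
  have em: "emeasure (density lborel (\<lambda>r. ennreal (k r))) S = ennreal (\<integral>r. k r * indicator S r \<partial>lborel)"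
    if [measurable]: "S \<in> sets borel" and k: "k \<in> borel_measurable borel" "\<And>r. 0 \<le> k r"
      and ki: "integrable lborel (\<lambda>r. k r * indicator S r)" for S k
  proof -
    have "emeasure (density lborel (\<lambda>r. ennreal (k r))) S = (\<integral>\<^sup>+ r. ennreal (k r) * indicator S r \<partial>lborel)"
      using k by (intro emeasure_density) auto
    also have "\<dots> = (\<integral>\<^sup>+ r. ennreal (k r * indicator S r) \<partial>lborel)"
      by (intro nn_integral_cong) (auto split: split_indicator)
    also have "\<dots> = ennreal (\<integral>r. k r * indicator S r \<partial>lborel)"
      using ki k by (intro nn_integral_eq_integral) auto
    finally show ?thesis .
  qed
  have pn: "(\<integral>r. hp r * indicator {x<..} r \<partial>lborel) = (\<integral>r. hn r * indicator {x<..} r \<partial>lborel)" for x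
  proof -
    have "(\<integral>r. hp r * indicator {x<..} r \<partial>lborel) - (\<integral>r. hn r * indicator {x<..} r \<partial>lborel)
        = (\<integral>r. hp r * indicator {x<..} r - hn r * indicator {x<..} r \<partial>lborel)"
      using ip in_ by simp
    also have "\<dots> = (\<integral>r. indicator {max b x<..<0} r * h r \<partial>lborel)"
      by (intro Bochner_Integration.integral_cong) (auto simp: hp_def hn_def max_def split: split_indicator)
    also have "\<dots> = 0"
    proof (cases "max b x < 0")
      case True then show ?thesis by (intro h0) auto
    next
      case False then have "{max b x<..<0::real} = {}" by auto
      then show ?thesis by simp
    qed
    finally show ?thesis by simp
  qed
  have "density lborel (\<lambda>r. ennreal (hp r)) = density lborel (\<lambda>r. ennreal (hn r))"
  proof (rule measure_eqI_lessThan)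
    fix x
    show "emeasure (density lborel (\<lambda>r. ennreal (hp r))) {x<..} < \<infinity>"
      using em[of "{x<..}" hp] ip[of "{x<..}"] by (simp add: hp_def)
    show "emeasure (density lborel (\<lambda>r. ennreal (hp r))) {x<..} = emeasure (density lborel (\<lambda>r. ennreal (hn r))) {x<..}"
      using em[of "{x<..}" hp] em[of "{x<..}" hn] ip[of "{x<..}"] in_[of "{x<..}"] pn[of x]
      by (simp add: hp_def hn_def)
  qed auto
  then have "AE r in lborel. ennreal (hp r) = ennreal (hn r)"
    by (intro sigma_finite_measure.density_unique[OF sigma_finite_lborel]) auto
  then show ?thesis
    by eventually_elim (auto simp: hp_def hn_def max_def split: if_splits)
qed

lemma dens_zero:
  fixes h :: "real \<Rightarrow> real"
  assumes hm[measurable]: "h \<in> borel_measurable borel"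
    and hi: "\<And>b. integrable lborel (\<lambda>r. indicator {b<..<0} r * h r)"
    and h0: "\<And>a. a < 0 \<Longrightarrow> (\<integral>r. indicator {a<..<0} r * h r \<partial>lborel) = 0"
  shows "AE r in lborel. r < 0 \<longrightarrow> h r = 0"
proof -
  have "\<forall>n::nat. AE r in lborel. r \<in> {- real n<..<0} \<longrightarrow> h r = 0"
    using dens_zero_b[OF hm hi h0] by blast
  then have "AE r in lborel. \<forall>n::nat. r \<in> {- real n<..<0} \<longrightarrow> h r = 0"
    by (rule AE_all_countable[THEN iffD2])
  then show ?thesis
  proof eventually_elim
    case (elim r)
    show ?case
    proof
      assume "r < 0"
      obtain n :: nat where "- r < real n" using reals_Archimedean2 by blast
      then have "r \<in> {- real n<..<0}" using \<open>r < 0\<close> by simp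
      then show "h r = 0" using elim by blast
    qed
  qed
qed


context setting begin

interpretation prob_space \<mu> by (rule P)

lemma cond_nn:
  fixes Yp :: "(real \<Rightarrow> real) \<Rightarrow> real"
  assumes Ym[measurable]: "Yp \<in> borel_measurable \<mu>" and Yi: "integrable \<mu> Yp" and nn: "\<And>x. 0 \<le> Yp x"
  obtains c where "c \<in> borel_measurable borel" "integrable \<mu> (\<lambda>x. c (gmin x))"
    "\<And>A. A \<in> sets borel \<Longrightarrow> (\<integral>x. indicator A (gmin x) * Yp x \<partial>\<mu>) = (\<integral>x. indicator A (gmin x) * c (gmin x) \<partial>\<mu>)"
proof -
  define \<nu> where "\<nu> = distr \<mu> borel gmin"
  define D where "D = density \<mu> (\<lambda>x. ennreal (Yp x))"
  define N where "N = distr D borel gmin"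
  interpret \<nu>: prob_space \<nu> unfolding \<nu>_def by (rule prob_space_distr) simp
  have gD: "gmin \<in> measurable D borel"
    unfolding D_def using measurable_cong_sets[OF sets_density refl] g_meas by blast
  have sN: "sets N = sets \<nu>" by (simp add: N_def \<nu>_def)
  have emN: "emeasure N A = (\<integral>\<^sup>+ x. ennreal (Yp x) * indicator A (gmin x) \<partial>\<mu>)" if A[measurable]: "A \<in> sets borel" for A
  proof -
    have "emeasure N A = emeasure D (gmin -` A \<inter> space D)"
      unfolding N_def by (rule emeasure_distr[OF gD A])
    also have "\<dots> = (\<integral>\<^sup>+ x. ennreal (Yp x) * indicator (gmin -` A \<inter> space \<mu>) x \<partial>\<mu>)"
      unfolding D_def by (subst emeasure_density) (auto simp: D_def)
    also have "\<dots> = (\<integral>\<^sup>+ x. ennreal (Yp x) * indicator A (gmin x) \<partial>\<mu>)"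
      by (rule nn_integral_cong) (auto split: split_indicator)
    finally show ?thesis .
  qed
  have ac: "absolutely_continuous \<nu> N"
    unfolding absolutely_continuous_def
  proof
    fix A assume "A \<in> null_sets \<nu>"
    then have A[measurable]: "A \<in> sets borel" and A0: "emeasure \<nu> A = 0" by (auto simp: \<nu>_def null_sets_def)
    have "emeasure \<mu> (gmin -` A \<inter> space \<mu>) = 0" using A0 unfolding \<nu>_def by (subst (asm) emeasure_distr) auto
    then have "gmin -` A \<inter> space \<mu> \<in> null_sets \<mu>" by (intro null_setsI) auto
    then have "AE x in \<mu>. x \<notin> gmin -` A \<inter> space \<mu>" by (rule AE_not_in)
    then have "AE x in \<mu>. ennreal (Yp x) * indicator A (gmin x) = 0"
      by (rule AE_mp) (intro AE_I2, auto split: split_indicator)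
    then have "(\<integral>\<^sup>+ x. ennreal (Yp x) * indicator A (gmin x) \<partial>\<mu>) = 0"
      by (subst nn_integral_0_iff_AE) auto
    then show "A \<in> null_sets N" using emN[OF A] by (intro null_setsI) (auto simp: N_def)
  qed
  define h where "h = RN_deriv \<nu> N"
  have hm[measurable]: "h \<in> borel_measurable borel"
    unfolding h_def using borel_measurable_RN_deriv[of \<nu> N] by (simp add: \<nu>_def)
  have dens: "density \<nu> h = N" unfolding h_def by (rule \<nu>.density_RN_deriv[OF ac sN])
  have E1: "(\<integral>\<^sup>+ x. ennreal (Yp x) * indicator A (gmin x) \<partial>\<mu>) = (\<integral>\<^sup>+ x. h (gmin x) * indicator A (gmin x) \<partial>\<mu>)"
    if A[measurable]: "A \<in> sets borel" for A
  proof -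
    have "(\<integral>\<^sup>+ x. ennreal (Yp x) * indicator A (gmin x) \<partial>\<mu>) = emeasure N A" using emN[OF A] by simp
    also have "\<dots> = emeasure (density \<nu> h) A" using dens by simp
    also have "\<dots> = (\<integral>\<^sup>+ r. h r * indicator A r \<partial>\<nu>)"
      by (rule emeasure_density) (auto simp: \<nu>_def)
    also have "\<dots> = (\<integral>\<^sup>+ x. h (gmin x) * indicator A (gmin x) \<partial>\<mu>)"
      unfolding \<nu>_def by (rule nn_integral_distr) auto
    finally show ?thesis .
  qed
  have "(\<integral>\<^sup>+ x. h (gmin x) \<partial>\<mu>) = (\<integral>\<^sup>+ x. ennreal (Yp x) \<partial>\<mu>)" using E1[of UNIV] by simp
  also have "\<dots> = ennreal (\<integral>x. Yp x \<partial>\<mu>)" using Yi nn by (intro nn_integral_eq_integral) auto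
  finally have fin: "(\<integral>\<^sup>+ x. h (gmin x) \<partial>\<mu>) < \<infinity>" by simp
  have "AE x in \<mu>. h (gmin x) \<noteq> \<infinity>" using fin by (intro nn_integral_PInf_AE) auto
  then have ae: "AE x in \<mu>. ennreal (enn2real (h (gmin x))) = h (gmin x)"
    by eventually_elim (simp add: less_top)
  define c where "c r = enn2real (h r)" for r
  have cm[measurable]: "c \<in> borel_measurable borel" unfolding c_def[abs_def] by measurable
  have ci: "integrable \<mu> (\<lambda>x. c (gmin x))"
  proof (rule integrableI_bounded)
    have "(\<integral>\<^sup>+ x. norm (c (gmin x)) \<partial>\<mu>) = (\<integral>\<^sup>+ x. h (gmin x) \<partial>\<mu>)"
      using ae by (intro nn_integral_cong_AE) (auto simp: c_def)
    then show "(\<integral>\<^sup>+ x. norm (c (gmin x)) \<partial>\<mu>) < \<infinity>" using fin by simp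
  qed measurable
  show ?thesis
  proof (rule that[OF cm ci])
    fix A :: "real set" assume A[measurable]: "A \<in> sets borel"
    have i1: "integrable \<mu> (\<lambda>x. indicator A (gmin x) * Yp x)"
      by (rule Bochner_Integration.integrable_bound[OF Yi]) (auto split: split_indicator)
    have i2: "integrable \<mu> (\<lambda>x. indicator A (gmin x) * c (gmin x))"
      by (rule Bochner_Integration.integrable_bound[OF ci]) (auto split: split_indicator)
    have "ennreal (\<integral>x. indicator A (gmin x) * Yp x \<partial>\<mu>) = (\<integral>\<^sup>+ x. ennreal (indicator A (gmin x) * Yp x) \<partial>\<mu>)"
      using i1 nn by (intro nn_integral_eq_integral[symmetric]) auto
    also have "\<dots> = (\<integral>\<^sup>+ x. ennreal (Yp x) * indicator A (gmin x) \<partial>\<mu>)"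
      by (intro nn_integral_cong) (auto split: split_indicator)
    also have "\<dots> = (\<integral>\<^sup>+ x. h (gmin x) * indicator A (gmin x) \<partial>\<mu>)" by (rule E1[OF A])
    also have "\<dots> = (\<integral>\<^sup>+ x. ennreal (indicator A (gmin x) * c (gmin x)) \<partial>\<mu>)"
      using ae by (intro nn_integral_cong_AE) (auto simp: c_def split: split_indicator)
    also have "\<dots> = ennreal (\<integral>x. indicator A (gmin x) * c (gmin x) \<partial>\<mu>)"
      using i2 by (intro nn_integral_eq_integral) (auto simp: c_def)
    finally show "(\<integral>x. indicator A (gmin x) * Yp x \<partial>\<mu>) = (\<integral>x. indicator A (gmin x) * c (gmin x) \<partial>\<mu>)"
      using i1 i2 nn by (subst (asm) ennreal_inj) (auto intro!: integral_nonneg simp: c_def)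
  qed
qed

end


context setting begin

interpretation prob_space \<mu> by (rule P)

lemma sint: fixes k :: "(real \<Rightarrow> real) \<Rightarrow> real" shows "(LINT x:{x\<in>space \<mu>. gmin x \<in> A}|\<mu>. k x) = (\<integral>x. indicator A (gmin x) * k x \<partial>\<mu>)"
  unfolding set_lebesgue_integral_def
  by (intro Bochner_Integration.integral_cong) (auto split: split_indicator)

lemma c0_exists: "\<exists>c0. cond_exp_version \<mu> Y c0"
proof -
  have [measurable]: "(\<lambda>x. max 0 (Y x)) \<in> borel_measurable \<mu>" "(\<lambda>x. max 0 (- Y x)) \<in> borel_measurable \<mu>"
    by measurable
  have ip: "integrable \<mu> (\<lambda>x. max 0 (Y x))" using Y_int by (intro integrable_max) auto
  have in_: "integrable \<mu> (\<lambda>x. max 0 (- Y x))" using Y_int by (intro integrable_max) auto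
  obtain cp where cp: "cp \<in> borel_measurable borel" "integrable \<mu> (\<lambda>x. cp (gmin x))"
    "\<And>A. A \<in> sets borel \<Longrightarrow> (\<integral>x. indicator A (gmin x) * max 0 (Y x) \<partial>\<mu>) = (\<integral>x. indicator A (gmin x) * cp (gmin x) \<partial>\<mu>)"
    by (rule cond_nn[OF _ ip]) auto
  obtain cn where cn: "cn \<in> borel_measurable borel" "integrable \<mu> (\<lambda>x. cn (gmin x))"
    "\<And>A. A \<in> sets borel \<Longrightarrow> (\<integral>x. indicator A (gmin x) * max 0 (- Y x) \<partial>\<mu>) = (\<integral>x. indicator A (gmin x) * cn (gmin x) \<partial>\<mu>)"
    by (rule cond_nn[OF _ in_]) auto
  define c0 where "c0 r = cp r - cn r" for r
  have "cond_exp_version \<mu> Y c0"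
    unfolding cond_exp_version_def
  proof (intro conjI ballI)
    show "c0 \<in> borel_measurable borel" unfolding c0_def[abs_def] using cp(1) cn(1) by measurable
    show "integrable \<mu> (\<lambda>x. c0 (gmin x))" unfolding c0_def using cp(2) cn(2) by simp
    fix A :: "real set" assume A[measurable]: "A \<in> sets borel"
    have i1: "integrable \<mu> (\<lambda>x. indicator A (gmin x) * max 0 (Y x))"
      by (rule Bochner_Integration.integrable_bound[OF ip]) (auto split: split_indicator)
    have i2: "integrable \<mu> (\<lambda>x. indicator A (gmin x) * max 0 (- Y x))"
      by (rule Bochner_Integration.integrable_bound[OF in_]) (auto split: split_indicator)
    have [measurable]: "cp \<in> borel_measurable borel" "cn \<in> borel_measurable borel" using cp(1) cn(1) by auto
    have i3: "integrable \<mu> (\<lambda>x. indicator A (gmin x) * cp (gmin x))"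
      by (rule Bochner_Integration.integrable_bound[OF cp(2)]) (auto split: split_indicator)
    have i4: "integrable \<mu> (\<lambda>x. indicator A (gmin x) * cn (gmin x))"
      by (rule Bochner_Integration.integrable_bound[OF cn(2)]) (auto split: split_indicator)
    have "(\<integral>x. indicator A (gmin x) * Y x \<partial>\<mu>)
        = (\<integral>x. indicator A (gmin x) * max 0 (Y x) - indicator A (gmin x) * max 0 (- Y x) \<partial>\<mu>)"
      by (intro Bochner_Integration.integral_cong) (auto simp: max_def)
    also have "\<dots> = (\<integral>x. indicator A (gmin x) * max 0 (Y x) \<partial>\<mu>) - (\<integral>x. indicator A (gmin x) * max 0 (- Y x) \<partial>\<mu>)"
      using i1 i2 by simp
    also have "\<dots> = (\<integral>x. indicator A (gmin x) * cp (gmin x) \<partial>\<mu>) - (\<integral>x. indicator A (gmin x) * cn (gmin x) \<partial>\<mu>)"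
      using cp(3)[OF A] cn(3)[OF A] by simp
    also have "\<dots> = (\<integral>x. indicator A (gmin x) * c0 (gmin x) \<partial>\<mu>)"
      using i3 i4 by (simp add: c0_def algebra_simps)
    finally show "(LINT x:{x\<in>space \<mu>. gmin x \<in> A}|\<mu>. Y x) = (LINT x:{x\<in>space \<mu>. gmin x \<in> A}|\<mu>. c0 (gmin x))"
      by (simp add: sint)
  qed
  then show ?thesis by blast
qed

lemma part3:
  assumes cev: "cond_exp_version \<mu> Y c"
  shows "AE r in lborel. r < 0 \<longrightarrow> c r * \<rho> r = F r"
proof -
  have cm[measurable]: "c \<in> borel_measurable borel" and ci: "integrable \<mu> (\<lambda>x. c (gmin x))"
    and cs: "\<And>A. A \<in> sets borel \<Longrightarrow> (LINT x:{x\<in>space \<mu>. gmin x \<in> A}|\<mu>. Y x) = (LINT x:{x\<in>space \<mu>. gmin x \<in> A}|\<mu>. c (gmin x))"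
    using cev unfolding cond_exp_version_def by auto
  define h where "h r = c r * \<rho> r - F0 r" for r
  have hm[measurable]: "h \<in> borel_measurable borel" unfolding h_def[abs_def] by measurable
  have key: "integrable lborel (\<lambda>r. indicator {b<..<0} r * (c r * \<rho> r)) \<and>
     (\<integral>x. indicator {b<..<0} (gmin x) * c (gmin x) \<partial>\<mu>) = (\<integral>r. indicator {b<..<0} r * (c r * \<rho> r) \<partial>lborel)" for b
  proof -
    have lr: "integrable \<mu> (\<lambda>x. indicator {..0} (gmin x) * (indicator {b<..<0} (gmin x) * c (gmin x))) \<longleftrightarrow>
         integrable lborel (\<lambda>r. (\<rho> r * indicator {..0} r) * (indicator {b<..<0} r * c r))"
      "(\<integral>x. indicator {..0} (gmin x) * (indicator {b<..<0} (gmin x) * c (gmin x)) \<partial>\<mu>) =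
         (\<integral>r. (\<rho> r * indicator {..0} r) * (indicator {b<..<0} r * c r) \<partial>lborel)"
      by (rule law_real, measurable)+
    have e1: "(\<lambda>x. indicator {..0} (gmin x) * (indicator {b<..<0} (gmin x) * c (gmin x))) = (\<lambda>x. indicator {b<..<0} (gmin x) * c (gmin x))"
      by (auto simp: fun_eq_iff split: split_indicator)
    have e2: "(\<lambda>r. (\<rho> r * indicator {..0} r) * (indicator {b<..<0} r * c r)) = (\<lambda>r. indicator {b<..<0} r * (c r * \<rho> r))"
      by (auto simp: fun_eq_iff split: split_indicator)
    have "integrable \<mu> (\<lambda>x. indicator {b<..<0} (gmin x) * c (gmin x))"
      by (rule Bochner_Integration.integrable_bound[OF ci]) (auto split: split_indicator)
    then show ?thesis using lr unfolding e1 e2 by simp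
  qed
  have hi: "integrable lborel (\<lambda>r. indicator {b<..<0} r * h r)" for b
  proof -
    have "integrable lborel (\<lambda>r. indicator {b<..<0} r * F0 r)"
      using indF_int[of b] by (rule back_subst[where P="integrable lborel"]) (auto simp: fun_eq_iff F0_def split: split_indicator)
    then show ?thesis using key[of b] unfolding h_def by (simp add: algebra_simps)
  qed
  have h0: "(\<integral>r. indicator {a<..<0} r * h r \<partial>lborel) = 0" if a: "a < 0" for a
  proof -
    have "(\<integral>r. indicator {a<..<0} r * (c r * \<rho> r) \<partial>lborel) = (\<integral>x. indicator {a<..<0} (gmin x) * c (gmin x) \<partial>\<mu>)"
      using key[of a] by simp
    also have "\<dots> = (\<integral>x. indicator {a<..<0} (gmin x) * Y x \<partial>\<mu>)"
    proof -
      have "(LINT x:{x\<in>space \<mu>. gmin x \<in> {a<..<0}}|\<mu>. Y x) = (LINT x:{x\<in>space \<mu>. gmin x \<in> {a<..<0}}|\<mu>. c (gmin x))"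
        by (rule cs) simp
      then show ?thesis unfolding sint by simp
    qed
    also have "\<dots> = (\<integral>r. indicator {a<..<0} r * F r \<partial>lborel)" by (rule main_id[OF a])
    also have "\<dots> = (\<integral>r. indicator {a<..<0} r * F0 r \<partial>lborel)"
      by (intro Bochner_Integration.integral_cong) (auto simp: F0_def split: split_indicator)
    finally have eq: "(\<integral>r. indicator {a<..<0} r * (c r * \<rho> r) \<partial>lborel) = (\<integral>r. indicator {a<..<0} r * F0 r \<partial>lborel)" .
    have i2: "integrable lborel (\<lambda>r. indicator {a<..<0} r * F0 r)"
      using indF_int[of a] by (rule back_subst[where P="integrable lborel"]) (auto simp: fun_eq_iff F0_def split: split_indicator)
    have "(\<integral>r. indicator {a<..<0} r * h r \<partial>lborel)
        = (\<integral>r. indicator {a<..<0} r * (c r * \<rho> r) - indicator {a<..<0} r * F0 r \<partial>lborel)"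
      unfolding h_def by (simp add: algebra_simps)
    also have "\<dots> = 0" using key[of a] i2 eq by simp
    finally show ?thesis .
  qed
  have "AE r in lborel. r < 0 \<longrightarrow> h r = 0" by (rule dens_zero[OF hm hi h0])
  then show ?thesis by eventually_elim (auto simp: h_def F0_eq)
qed

end


context setting begin

interpretation prob_space \<mu> by (rule P)

lemma part2: "\<exists>c \<rho>'. cond_exp_version \<mu> Y c \<and> (AE r in lborel. \<rho>' r = \<rho> r) \<and> (\<forall>r<0. c r * \<rho>' r = F r)"
proof -
  obtain c0 where cev0: "cond_exp_version \<mu> Y c0" using c0_exists by blast
  have c0m[measurable]: "c0 \<in> borel_measurable borel" and c0i: "integrable \<mu> (\<lambda>x. c0 (gmin x))"
    and c0s: "\<And>A. A \<in> sets borel \<Longrightarrow> (LINT x:{x\<in>space \<mu>. gmin x \<in> A}|\<mu>. Y x) = (LINT x:{x\<in>space \<mu>. gmin x \<in> A}|\<mu>. c0 (gmin x))"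
    using cev0 unfolding cond_exp_version_def by auto
  have ae0: "AE r in lborel. r < 0 \<longrightarrow> c0 r * \<rho> r = F r" by (rule part3[OF cev0])
  define \<rho>' where "\<rho>' r = (if r < 0 \<and> \<rho> r = 0 \<and> F0 r \<noteq> 0 then 1 else \<rho> r)" for r
  define c where "c r = (if r < 0 then (if \<rho>' r = 0 then 0 else F0 r / \<rho>' r) else c0 r)" for r
  have \<rho>'m[measurable]: "\<rho>' \<in> borel_measurable borel" unfolding \<rho>'_def[abs_def] by measurable
  have cm[measurable]: "c \<in> borel_measurable borel" unfolding c_def[abs_def] by measurable
  have i: "\<forall>r<0. c r * \<rho>' r = F r"
  proof (intro allI impI)
    fix r :: real assume r: "r < 0"
    show "c r * \<rho>' r = F r"
    proof (cases "\<rho>' r = 0")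
      case True
      then have "\<rho> r = 0" "\<not> F0 r \<noteq> 0" using r by (auto simp: \<rho>'_def split: if_splits)
      then show ?thesis using True r by (simp add: F0_eq)
    next
      case False
      then show ?thesis using r by (simp add: c_def F0_eq)
    qed
  qed
  have ii: "AE r in lborel. \<rho>' r = \<rho> r"
    using ae0 by eventually_elim (auto simp: \<rho>'_def F0_eq)
  define D where "D = {r. r < 0 \<and> c r \<noteq> c0 r}"
  have Dm[measurable]: "D \<in> sets borel" unfolding D_def by measurable
  have "emeasure \<mu> {x\<in>space \<mu>. gmin x \<in> D} = (\<integral>\<^sup>+ r. ennreal (\<rho> r) * indicator D r \<partial>lborel)"
    by (rule law) (auto simp: D_def)
  also have "\<dots> = 0"
  proof -
    have "AE r in lborel. ennreal (\<rho> r) * indicator D r = 0"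
      using ae0
    proof eventually_elim
      case (elim r)
      show ?case
      proof (cases "r \<in> D")
        case True
        then have r: "r < 0" "c r \<noteq> c0 r" by (auto simp: D_def)
        have "\<rho> r = 0"
        proof (rule ccontr)
          assume "\<rho> r \<noteq> 0"
          then have "\<rho>' r = \<rho> r" by (simp add: \<rho>'_def)
          then have "c r = F r / \<rho> r" using r \<open>\<rho> r \<noteq> 0\<close> by (simp add: c_def F0_eq)
          also have "\<dots> = c0 r" using elim r \<open>\<rho> r \<noteq> 0\<close> by (simp add: field_simps)
          finally show False using r by simp
        qed
        then show ?thesis by simp
      qed simp
    qed
    then show ?thesis by (subst nn_integral_0_iff_AE) auto
  qed
  finally have "emeasure \<mu> {x\<in>space \<mu>. gmin x \<in> D} = 0" .
  then have "AE x in \<mu>. gmin x \<notin> D"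
    by (subst AE_iff_measurable[of "{x\<in>space \<mu>. gmin x \<in> D}"]) auto
  then have aec: "AE x in \<mu>. c (gmin x) = c0 (gmin x)"
    by eventually_elim (auto simp: D_def c_def)
  have iii: "cond_exp_version \<mu> Y c"
    unfolding cond_exp_version_def
  proof (intro conjI ballI cm)
    show "integrable \<mu> (\<lambda>x. c (gmin x))"
      using c0i integrable_cong_AE[of "\<lambda>x. c (gmin x)" \<mu> "\<lambda>x. c0 (gmin x)"] aec by simp
    fix A :: "real set" assume A[measurable]: "A \<in> sets borel"
    have "(LINT x:{x\<in>space \<mu>. gmin x \<in> A}|\<mu>. c (gmin x)) = (LINT x:{x\<in>space \<mu>. gmin x \<in> A}|\<mu>. c0 (gmin x))"
      unfolding sint
    proof (rule integral_cong_AE)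
      show "AE x in \<mu>. indicator A (gmin x) * c (gmin x) = indicator A (gmin x) * c0 (gmin x)"
        using aec by eventually_elim simp
    qed measurable
    then show "(LINT x:{x\<in>space \<mu>. gmin x \<in> A}|\<mu>. Y x) = (LINT x:{x\<in>space \<mu>. gmin x \<in> A}|\<mu>. c (gmin x))"
      using c0s[OF A] by simp
  qed
  show ?thesis using i ii iii by blast
qed

lemma final:
  "continuous_on {..<0} (\<lambda>r. - (LINT x:{x\<in>space \<mu>. gmin x \<ge> r}|\<mu>. D\<phi> x z - W x * \<phi> x))
    \<and> (\<exists>c \<rho>'. cond_exp_version \<mu> (\<lambda>x. z (tau x) * \<phi> x) c
              \<and> (AE r in lborel. \<rho>' r = \<rho> r)
              \<and> (\<forall>r<0. c r * \<rho>' r = (\<lambda>r. - (LINT x:{x\<in>space \<mu>. gmin x \<ge> r}|\<mu>. D\<phi> x z - W x * \<phi> x)) r))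
    \<and> (\<forall>c. cond_exp_version \<mu> (\<lambda>x. z (tau x) * \<phi> x) c \<longrightarrow>
              (AE r in lborel. r < 0 \<longrightarrow> c r * \<rho> r = (\<lambda>r. - (LINT x:{x\<in>space \<mu>. gmin x \<ge> r}|\<mu>. D\<phi> x z - W x * \<phi> x)) r))"
proof -
  have eF: "(\<lambda>r. - (LINT x:{x\<in>space \<mu>. gmin x \<ge> r}|\<mu>. D\<phi> x z - W x * \<phi> x)) = F"
    by (simp add: fun_eq_iff F_def f_def)
  have eFr: "\<And>r. - (LINT x:{x\<in>space \<mu>. gmin x \<ge> r}|\<mu>. D\<phi> x z - W x * \<phi> x) = F r"
    by (simp add: F_def f_def)
  have eY: "(\<lambda>x. z (tau x) * \<phi> x) = Y" by (simp add: fun_eq_iff Y_def)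
  show ?thesis unfolding eF eY eFr using F_cont part2 part3 by blast
qed

end


theorem proposition4p5:
  fixes \<mu> :: "(real \<Rightarrow> real) measure"
    and e :: "nat \<Rightarrow> real \<Rightarrow> real" and lam :: "nat \<Rightarrow> real"
    and \<rho> :: "real \<Rightarrow> real"
    and \<phi> :: "(real \<Rightarrow> real) \<Rightarrow> real" and D\<phi> :: "(real \<Rightarrow> real) \<Rightarrow> (real \<Rightarrow> real) \<Rightarrow> real"
    and z :: "real \<Rightarrow> real" and W :: "(real \<Rightarrow> real) \<Rightarrow> real"
  assumes "covariance_data e lam"
    and "gaussian_on_E \<mu> e lam"
    and "CM_in_E e lam"
    and "H2 \<mu> e lam \<rho>"
    and "C1b \<phi> D\<phi>"
    and "z \<in> CM e lam"
    and "is_QW \<mu> e lam z W"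
  defines "F \<equiv> (\<lambda>r. - (LINT x:{x\<in>space \<mu>. gmin x \<ge> r}|\<mu>. D\<phi> x z - W x * \<phi> x))"
  shows "continuous_on {..<0} F
    \<and> (\<exists>c \<rho>'. cond_exp_version \<mu> (\<lambda>x. z (tau x) * \<phi> x) c
              \<and> (AE r in lborel. \<rho>' r = \<rho> r)
              \<and> (\<forall>r<0. c r * \<rho>' r = F r))
    \<and> (\<forall>c. cond_exp_version \<mu> (\<lambda>x. z (tau x) * \<phi> x) c \<longrightarrow>
              (AE r in lborel. r < 0 \<longrightarrow> c r * \<rho> r = F r))"
proof -
  have S: "setting \<mu> e lam \<rho> \<phi> D\<phi> z W"
    by (rule setting.intro[OF assms(2) assms(4) assms(5) assms(6) assms(7)])
  show ?thesis unfolding F_def by (rule setting.final[OF S])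
qed

end
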